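(* Let $\{w^k\}$ be generated by the L-GADMM iteration and $\{\bar w^k\}$ be the auxiliary sequence. Then for every $k\ge0$ and every $w^*\in\mathcal{W}^*$, $$\|w^{k+1}-w^*\|_H^2\le\|w^k-w^*\|_H^2-\|w^k-\bar w^k\|_N^2.$$
   Context: Standing setting. Let $m\ge 2$, $\ell$, $n_1,\dots,n_m$ be positive integers. For $i=1,\dots,m$ let $\theta_i:\mathbb{R}^{n_i}\to\mathbb{R}$ be convex, $\mathcal{X}_i\subseteq\mathbb{R}^{n_i}$ nonempty closed convex, $A_i\in\mathbb{R}^{\ell\times n_i}$ of full column rank, and $b\in\mathbb{R}^\ell$. Problem (P): $\min\{\sum_{i=1}^m\theta_i(x_i):\sum_{i=1}^mA_ix_i=b,\ x_i\in\mathcal{X}_i\}$, assumed to have a nonempty solution set. Write $u=(x_1,\dots,x_m)$, $w=(x_1,\dots,x_m,y)$ with $y\in\mathbb{R}^\ell$, $\theta(u)=\sum_i\theta_i(x_i)$, $F(w)=(-A_1^\top y,\dots,-A_m^\top y,\ \sum_iA_ix_i-b)$, $\mathcal{W}=\mathcal{X}_1\times\cdots\times\mathcal{X}_m\times\mathbb{R}^\ell$, and $\mathcal{W}^*=\{w^*\in\mathcal{W}:\theta(u)-\theta(u^* )+(w-w^* )^\top F(w^* )\ge0\ \forall w\in\mathcal{W}\}$ (nonempty). For symmetric $G$, $\|v\|_G^2:=v^\top Gv$; $\|\cdot\|$ is the Euclidean norm. Vectors are partitioned as $w=(R,x_m,y)$ with $R=(x_1,\dots,x_{m-1})$. Parameters: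 $\rho>0$, $\gamma\in(0,2)$, symmetric positive definite $P_i\in\mathbb{R}^{n_i\times n_i}$ ($i=1,\dots,m$) such that $G_1\succ0$, where $G_1$ is the symmetric block matrix with diagonal blocks $P_1,\dots,P_{m-1}$ and $(i,j)$ block $-\rho A_i^\top A_j$ for $i\ne j$, $1\le i,j\le m-1$. Matrices (w.r.t. the partition $(R,x_m,y)$): $Q=\begin{pmatrix}G_1&0&0\\0&\rho A_m^\top A_m+P_m&(1-\gamma)A_m^\top\\0&-A_m&\frac1\rho I_\ell\end{pmatrix}$, $M=\begin{pmatrix}I&0&0\\0&I_{n_m}&0\\0&-\rho A_m&\gamma I_\ell\end{pmatrix}$, $H=\begin{pmatrix}G_1&0&0\\0&P_m+\frac\rho\gamma A_m^\top A_m&\frac{1-\gamma}\gamma A_m^\top\\0&\frac{1-\gamma}\gamma A_m&\frac1{\gamma\rho}I_\ell\end{pmatrix}$, $N=Q^\top+Q-M^\top HM$. L-GADMM iteration: from an arbitrary $w^0=(x_1^0,\dots,x_m^0,y^0)\in\mathcal{W}$, for $k=0,1,2,\dots$: $x_j^{k+1}=\arg\min_{x_j\in\mathcal{X}_j}\{\theta_j(x_j)+\frac\rho2\|A_jx_j+\sum_{i=1,i\ne j}^mA_ix_i^k-b-\frac{y^k}\rho\|^2+\frac12\|x_j-x_j^k\|_{P_j}^2\}$ for $j=1,\dots,m-1$; $x_m^{k+1}=\arg\min_{x_m\in\mathcal{X}_m}\{\theta_m(x_m)+\frac\rho2\|\gamma\sum_{i=1}^{m-1}A_ix_i^{k+1}+(1-\gamma)(b-A_mx_m^k)+A_mx_m-b-\frac{y^k}\rho\|^2+\frac12\|x_m-x_m^k\|_{P_m}^2\}$;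 $y^{k+1}=y^k-\rho\big(\gamma\sum_{i=1}^{m-1}A_ix_i^{k+1}+(1-\gamma)(b-A_mx_m^k)+A_mx_m^{k+1}-b\big)$. Auxiliary sequence: $\bar w^k=(\bar x_1^k,\dots,\bar x_m^k,\bar y^k)$ with $\bar x_i^k=x_i^{k+1}$ ($i=1,\dots,m$) and $\bar y^k=y^k-\rho(\sum_{i=1}^{m-1}A_ix_i^{k+1}+A_mx_m^k-b)$; $\bar u^k=(\bar x_1^k,\dots,\bar x_m^k)$, $R^k=(x_1^k,\dots,x_{m-1}^k)$, $\bar R^k=(\bar x_1^k,\dots,\bar x_{m-1}^k)$. *)

theory Defs
  imports "HOL-Analysis.Analysis" "Jordan_Normal_Form.Matrix"
begin

text \<open>Blocks 1..m hold x_1..x_m and block m+1 holds y.\<close>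

definition sqn :: "real vec \<Rightarrow> real" where
  "sqn v = v \<bullet> v"

definition gnorm2 :: "real mat \<Rightarrow> real vec \<Rightarrow> real" where
  "gnorm2 G v = v \<bullet> (G *\<^sub>v v)"

definition vsum :: "nat \<Rightarrow> (nat \<Rightarrow> real vec) \<Rightarrow> nat set \<Rightarrow> real vec" where
  "vsum d f I = vec d (\<lambda>r. \<Sum>i\<in>I. f i $ r)"

definition convex_vset :: "nat \<Rightarrow> real vec set \<Rightarrow> bool" where
  "convex_vset d S \<longleftrightarrow> S \<subseteq> carrier_vec d \<and>
     (\<forall>x\<in>S. \<forall>y\<in>S. \<forall>t::real. 0 \<le> t \<and> t \<le> 1 \<longrightarrow> t \<cdot>\<^sub>v x + (1 - t) \<cdot>\<^sub>v y \<in> S)"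

definition closed_vset :: "nat \<Rightarrow> real vec set \<Rightarrow> bool" where
  "closed_vset d S \<longleftrightarrow> S \<subseteq> carrier_vec d \<and>
     (\<forall>s x. (\<forall>k. s k \<in> S) \<and> x \<in> carrier_vec d \<and> (\<forall>r<d. (\<lambda>k. s k $ r) \<longlonglongrightarrow> x $ r)
        \<longrightarrow> x \<in> S)"

definition convex_vfun :: "nat \<Rightarrow> (real vec \<Rightarrow> real) \<Rightarrow> bool" where
  "convex_vfun d f \<longleftrightarrow> (\<forall>x\<in>carrier_vec d. \<forall>y\<in>carrier_vec d. \<forall>t::real. 0 \<le> t \<and> t \<le> 1 \<longrightarrow>
      f (t \<cdot>\<^sub>v x + (1 - t) \<cdot>\<^sub>v y) \<le> t * f x + (1 - t) * f y)"

definition full_col_rank :: "real mat \<Rightarrow> bool" where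
  "full_col_rank A \<longleftrightarrow> (\<forall>v\<in>carrier_vec (dim_col A). A *\<^sub>v v = 0\<^sub>v (dim_row A) \<longrightarrow> v = 0\<^sub>v (dim_col A))"

definition sym_posdef :: "nat \<Rightarrow> real mat \<Rightarrow> bool" where
  "sym_posdef d P \<longleftrightarrow> P \<in> carrier_mat d d \<and> transpose_mat P = P \<and>
     (\<forall>v\<in>carrier_vec d. v \<noteq> 0\<^sub>v d \<longrightarrow> v \<bullet> (P *\<^sub>v v) > 0)"

definition bqf :: "nat set \<Rightarrow> (nat \<Rightarrow> nat \<Rightarrow> real mat) \<Rightarrow> (nat \<Rightarrow> real vec) \<Rightarrow> real" where
  "bqf I B v = (\<Sum>i\<in>I. \<Sum>j\<in>I. v i \<bullet> (B i j *\<^sub>v v j))"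

definition btrans :: "(nat \<Rightarrow> nat \<Rightarrow> real mat) \<Rightarrow> nat \<Rightarrow> nat \<Rightarrow> real mat" where
  "btrans B i j = transpose_mat (B j i)"

definition badd :: "(nat \<Rightarrow> nat \<Rightarrow> real mat) \<Rightarrow> (nat \<Rightarrow> nat \<Rightarrow> real mat) \<Rightarrow> nat \<Rightarrow> nat \<Rightarrow> real mat" where
  "badd B C i j = B i j + C i j"

definition bsub :: "(nat \<Rightarrow> nat \<Rightarrow> real mat) \<Rightarrow> (nat \<Rightarrow> nat \<Rightarrow> real mat) \<Rightarrow> nat \<Rightarrow> nat \<Rightarrow> real mat" where
  "bsub B C i j = B i j - C i j"

definition bmul :: "(nat \<Rightarrow> nat) \<Rightarrow> nat set \<Rightarrow> (nat \<Rightarrow> nat \<Rightarrow> real mat) \<Rightarrow> (nat \<Rightarrow> nat \<Rightarrow> real mat)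
    \<Rightarrow> nat \<Rightarrow> nat \<Rightarrow> real mat" where
  "bmul d I B C i j = mat (d i) (d j) (\<lambda>(r, s). \<Sum>k\<in>I. (B i k * C k j) $$ (r, s))"

definition bdim :: "nat \<Rightarrow> nat \<Rightarrow> (nat \<Rightarrow> nat) \<Rightarrow> nat \<Rightarrow> nat" where
  "bdim m l n i = (if i \<le> m then n i else l)"

definition G1blk :: "nat \<Rightarrow> real \<Rightarrow> (nat \<Rightarrow> real mat) \<Rightarrow> (nat \<Rightarrow> real mat) \<Rightarrow> nat \<Rightarrow> nat \<Rightarrow> real mat" where
  "G1blk m \<rho> A P i j = (if i = j then P i else (- \<rho>) \<cdot>\<^sub>m (transpose_mat (A i) * A j))"

definition Hblk :: "nat \<Rightarrow> nat \<Rightarrow> (nat \<Rightarrow> nat) \<Rightarrow> real \<Rightarrow> real \<Rightarrow> (nat \<Rightarrow> real mat) \<Rightarrow> (nat \<Rightarrow> real mat)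
    \<Rightarrow> nat \<Rightarrow> nat \<Rightarrow> real mat" where
  "Hblk m l n \<rho> \<gamma> A P i j =
    (if i < m \<and> j < m then G1blk m \<rho> A P i j
     else if i = m \<and> j = m then P m + (\<rho> / \<gamma>) \<cdot>\<^sub>m (transpose_mat (A m) * A m)
     else if i = m \<and> j = m + 1 then ((1 - \<gamma>) / \<gamma>) \<cdot>\<^sub>m transpose_mat (A m)
     else if i = m + 1 \<and> j = m then ((1 - \<gamma>) / \<gamma>) \<cdot>\<^sub>m A m
     else if i = m + 1 \<and> j = m + 1 then (1 / (\<gamma> * \<rho>)) \<cdot>\<^sub>m 1\<^sub>m l
     else 0\<^sub>m (bdim m l n i) (bdim m l n j))"

definition Qblk :: "nat \<Rightarrow> nat \<Rightarrow> (nat \<Rightarrow> nat) \<Rightarrow> real \<Rightarrow> real \<Rightarrow> (nat \<Rightarrow> real mat) \<Rightarrow> (nat \<Rightarrow> real mat)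
    \<Rightarrow> nat \<Rightarrow> nat \<Rightarrow> real mat" where
  "Qblk m l n \<rho> \<gamma> A P i j =
    (if i < m \<and> j < m then G1blk m \<rho> A P i j
     else if i = m \<and> j = m then \<rho> \<cdot>\<^sub>m (transpose_mat (A m) * A m) + P m
     else if i = m \<and> j = m + 1 then (1 - \<gamma>) \<cdot>\<^sub>m transpose_mat (A m)
     else if i = m + 1 \<and> j = m then - A m
     else if i = m + 1 \<and> j = m + 1 then (1 / \<rho>) \<cdot>\<^sub>m 1\<^sub>m l
     else 0\<^sub>m (bdim m l n i) (bdim m l n j))"

definition Mblk :: "nat \<Rightarrow> nat \<Rightarrow> (nat \<Rightarrow> nat) \<Rightarrow> real \<Rightarrow> real \<Rightarrow> (nat \<Rightarrow> real mat)
    \<Rightarrow> nat \<Rightarrow> nat \<Rightarrow> real mat" where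
  "Mblk m l n \<rho> \<gamma> A i j =
    (if i = j \<and> i \<le> m then 1\<^sub>m (n i)
     else if i = m + 1 \<and> j = m then (- \<rho>) \<cdot>\<^sub>m A m
     else if i = m + 1 \<and> j = m + 1 then \<gamma> \<cdot>\<^sub>m 1\<^sub>m l
     else 0\<^sub>m (bdim m l n i) (bdim m l n j))"

definition Nblk :: "nat \<Rightarrow> nat \<Rightarrow> (nat \<Rightarrow> nat) \<Rightarrow> real \<Rightarrow> real \<Rightarrow> (nat \<Rightarrow> real mat) \<Rightarrow> (nat \<Rightarrow> real mat)
    \<Rightarrow> nat \<Rightarrow> nat \<Rightarrow> real mat" where
  "Nblk m l n \<rho> \<gamma> A P =
    (let Q = Qblk m l n \<rho> \<gamma> A P; M = Mblk m l n \<rho> \<gamma> A; H = Hblk m l n \<rho> \<gamma> A P;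
         d = bdim m l n; I = {1..m+1}
     in bsub (badd (btrans Q) Q) (bmul d I (btrans M) (bmul d I H M)))"

definition wvec :: "nat \<Rightarrow> (nat \<Rightarrow> real vec) \<Rightarrow> real vec \<Rightarrow> nat \<Rightarrow> real vec" where
  "wvec m x y i = (if i \<le> m then x i else y)"

definition wdiff :: "(nat \<Rightarrow> real vec) \<Rightarrow> (nat \<Rightarrow> real vec) \<Rightarrow> nat \<Rightarrow> real vec" where
  "wdiff v w i = v i - w i"

definition Fblk :: "nat \<Rightarrow> nat \<Rightarrow> (nat \<Rightarrow> real mat) \<Rightarrow> real vec \<Rightarrow> (nat \<Rightarrow> real vec) \<Rightarrow> real vec
    \<Rightarrow> nat \<Rightarrow> real vec" where
  "Fblk m l A b x y i = (if i \<le> m then - (transpose_mat (A i) *\<^sub>v y)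
                         else vsum l (\<lambda>j. A j *\<^sub>v x j) {1..m} - b)"

definition Wstar :: "nat \<Rightarrow> nat \<Rightarrow> (nat \<Rightarrow> nat) \<Rightarrow> (nat \<Rightarrow> real vec \<Rightarrow> real) \<Rightarrow> (nat \<Rightarrow> real vec set)
    \<Rightarrow> (nat \<Rightarrow> real mat) \<Rightarrow> real vec \<Rightarrow> ((nat \<Rightarrow> real vec) \<times> real vec) set" where
  "Wstar m l n \<theta> X A b = {(xs, ys).
     (\<forall>i\<in>{1..m}. xs i \<in> X i) \<and> ys \<in> carrier_vec l \<and>
     (\<forall>x y. (\<forall>i\<in>{1..m}. x i \<in> X i) \<and> y \<in> carrier_vec l \<longrightarrow>
        (\<Sum>i\<in>{1..m}. \<theta> i (x i)) - (\<Sum>i\<in>{1..m}. \<theta> i (xs i))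
        + (\<Sum>i\<in>{1..m+1}. wdiff (wvec m x y) (wvec m xs ys) i \<bullet> Fblk m l A b xs ys i) \<ge> 0)}"

end

theory Submission
  imports Defs
begin

unbundle no inner_syntax
unbundle no vec_syntax
lemma index_vsum: "r < d \<Longrightarrow> vsum d f I $ r = (\<Sum>i\<in>I. f i $ r)"
  by (simp add: vsum_def)
lemma dim_vsum[simp]: "dim_vec (vsum d f I) = d" by (simp add: vsum_def)
lemma vsum_carrier[simp]: "vsum d f I \<in> carrier_vec d" by (rule carrier_vecI) simp

lemma vsum_cong: "(\<And>i. i \<in> I \<Longrightarrow> f i = g i) \<Longrightarrow> vsum d f I = vsum d g I"
  by (simp add: vsum_def)

lemma vsum_insert: assumes "finite I" "i \<notin> I"
  shows "vsum d f (insert i I) = f i + vsum d f I"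
proof (rule eq_vecI)
  show "dim_vec (vsum d f (insert i I)) = dim_vec (f i + vsum d f I)" by simp
  fix r assume "r < dim_vec (f i + vsum d f I)"
  then have r: "r < d" by simp
  have "(f i + vsum d f I) $ r = f i $ r + vsum d f I $ r" using r by (subst index_add_vec) auto
  then show "vsum d f (insert i I) $ r = (f i + vsum d f I) $ r"
    using r assms by (simp add: index_vsum)
qed

lemma scalar_prod_expand: "w \<in> carrier_vec k \<Longrightarrow> a \<bullet> w = (\<Sum>r\<in>{0..<k}. a $ r * w $ r)"
  by (simp add: scalar_prod_def carrier_vecD)

lemma vsum_dot: assumes "finite I" "\<forall>i\<in>I. f i \<in> carrier_vec k"
  shows "a \<bullet> vsum k f I = (\<Sum>i\<in>I. a \<bullet> f i)"
proof -
  have "a \<bullet> vsum k f I = (\<Sum>r\<in>{0..<k}. a $ r * (\<Sum>i\<in>I. f i $ r))"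
    by (simp add: scalar_prod_def index_vsum)
  also have "\<dots> = (\<Sum>r\<in>{0..<k}. \<Sum>i\<in>I. a $ r * f i $ r)"
    by (simp add: sum_distrib_left)
  also have "\<dots> = (\<Sum>i\<in>I. \<Sum>r\<in>{0..<k}. a $ r * f i $ r)"
    by (rule sum.swap)
  also have "\<dots> = (\<Sum>i\<in>I. a \<bullet> f i)"
    using assms(2) by (intro sum.cong refl scalar_prod_expand[symmetric]) auto
  finally show ?thesis .
qed

lemma vsum_dot_left: assumes "finite I" "\<forall>i\<in>I. f i \<in> carrier_vec k" "a \<in> carrier_vec k"
  shows "vsum k f I \<bullet> a = (\<Sum>i\<in>I. f i \<bullet> a)"
proof -
  have "vsum k f I \<bullet> a = a \<bullet> vsum k f I" using assms by (intro comm_scalar_prod[of _ k]) auto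
  also have "\<dots> = (\<Sum>i\<in>I. a \<bullet> f i)" using assms(1,2) by (rule vsum_dot)
  also have "\<dots> = (\<Sum>i\<in>I. f i \<bullet> a)" using assms by (intro sum.cong refl comm_scalar_prod[of _ k]) auto
  finally show ?thesis .
qed

lemma mat_vsum: assumes "finite I" "B \<in> carrier_mat r k" "\<forall>i\<in>I. f i \<in> carrier_vec k"
  shows "B *\<^sub>v vsum k f I = vsum r (\<lambda>i. B *\<^sub>v f i) I"
proof (rule eq_vecI)
  have dr: "dim_row B = r" and dc: "dim_col B = k" using assms(2) by auto
  show "dim_vec (B *\<^sub>v vsum k f I) = dim_vec (vsum r (\<lambda>i. B *\<^sub>v f i) I)" by (simp add: dr)
  fix s assume "s < dim_vec (vsum r (\<lambda>i. B *\<^sub>v f i) I)"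
  then have s: "s < r" by simp
  have sB: "s < dim_row B" using s dr by simp
  have "(B *\<^sub>v vsum k f I) $ s = row B s \<bullet> vsum k f I" by (rule index_mult_mat_vec[OF sB])
  also have "\<dots> = (\<Sum>i\<in>I. row B s \<bullet> f i)" by (rule vsum_dot[OF assms(1,3)])
  also have "\<dots> = (\<Sum>i\<in>I. (B *\<^sub>v f i) $ s)" by (simp only: index_mult_mat_vec[OF sB])
  also have "\<dots> = vsum r (\<lambda>i. B *\<^sub>v f i) I $ s" by (rule index_vsum[OF s, symmetric])
  finally show "(B *\<^sub>v vsum k f I) $ s = vsum r (\<lambda>i. B *\<^sub>v f i) I $ s" .
qed

lemma vsum_zero_out: assumes "finite I" "J \<subseteq> I" "\<forall>i\<in>I-J. f i = 0\<^sub>v k"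
  shows "vsum k f I = vsum k f J"
  unfolding vsum_def
proof (rule eq_vecI)
  fix r assume "r < dim_vec (vec k (\<lambda>r. \<Sum>i\<in>J. f i $ r))"
  then have r: "r < k" by simp
  have "(\<Sum>i\<in>I. f i $ r) = (\<Sum>i\<in>J. f i $ r)"
    using assms r by (intro sum.mono_neutral_right) auto
  then show "vec k (\<lambda>r. \<Sum>i\<in>I. f i $ r) $ r = vec k (\<lambda>r. \<Sum>i\<in>J. f i $ r) $ r" using r by simp
qed simp

lemma vsum_single: assumes "finite I" "i0 \<in> I" "\<forall>i\<in>I-{i0}. f i = 0\<^sub>v k" "f i0 \<in> carrier_vec k"
  shows "vsum k f I = f i0"
proof -
  have "vsum k f I = vsum k f {i0}" using assms by (intro vsum_zero_out) auto
  also have "\<dots> = f i0" using assms(4) by (intro eq_vecI) (auto simp: index_vsum)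
  finally show ?thesis .
qed

lemma vsum_add: assumes "\<forall>i\<in>I. g i \<in> carrier_vec k"
  shows "vsum k (\<lambda>i. f i + g i) I = vsum k f I + vsum k g I"
proof (rule eq_vecI)
  fix r assume "r < dim_vec (vsum k f I + vsum k g I)"
  then have r: "r < k" by simp
  have "\<And>i. i \<in> I \<Longrightarrow> (f i + g i) $ r = f i $ r + g i $ r"
    using assms r by (intro index_add_vec) auto
  then have "(\<Sum>i\<in>I. (f i + g i) $ r) = (\<Sum>i\<in>I. f i $ r + g i $ r)"
    by (rule sum.cong[OF refl])
  then show "vsum k (\<lambda>i. f i + g i) I $ r = (vsum k f I + vsum k g I) $ r"
    using r by (simp add: index_vsum sum.distrib)
qed simp

lemma vsum_minus: assumes "\<forall>i\<in>I. g i \<in> carrier_vec k"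
  shows "vsum k (\<lambda>i. f i - g i) I = vsum k f I - vsum k g I"
proof (rule eq_vecI)
  fix r assume "r < dim_vec (vsum k f I - vsum k g I)"
  then have r: "r < k" by simp
  have "\<And>i. i \<in> I \<Longrightarrow> (f i - g i) $ r = f i $ r - g i $ r"
    using assms r by (intro index_minus_vec) auto
  then have "(\<Sum>i\<in>I. (f i - g i) $ r) = (\<Sum>i\<in>I. f i $ r - g i $ r)"
    by (rule sum.cong[OF refl])
  then show "vsum k (\<lambda>i. f i - g i) I $ r = (vsum k f I - vsum k g I) $ r"
    using r by (simp add: index_vsum sum_subtractf)
qed simp

lemma vsum_swap: "vsum k (\<lambda>j. vsum k (\<lambda>i. g j i) I) J = vsum k (\<lambda>i. vsum k (\<lambda>j. g j i) J) I"
proof (rule eq_vecI)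
  fix r assume "r < dim_vec (vsum k (\<lambda>i. vsum k (\<lambda>j. g j i) J) I)"
  then have r: "r < k" by simp
  show "vsum k (\<lambda>j. vsum k (\<lambda>i. g j i) I) J $ r = vsum k (\<lambda>i. vsum k (\<lambda>j. g j i) J) I $ r"
    unfolding index_vsum[OF r] by (rule sum.swap)
qed simp

definition bv :: "(nat \<Rightarrow> nat) \<Rightarrow> nat set \<Rightarrow> (nat \<Rightarrow> real vec) \<Rightarrow> bool" where
  "bv d I v \<longleftrightarrow> (\<forall>i\<in>I. v i \<in> carrier_vec (d i))"
definition bm :: "(nat \<Rightarrow> nat) \<Rightarrow> nat set \<Rightarrow> (nat \<Rightarrow> nat \<Rightarrow> real mat) \<Rightarrow> bool" where
  "bm d I B \<longleftrightarrow> (\<forall>i\<in>I. \<forall>j\<in>I. B i j \<in> carrier_mat (d i) (d j))"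
definition bbf :: "nat set \<Rightarrow> (nat \<Rightarrow> nat \<Rightarrow> real mat) \<Rightarrow> (nat \<Rightarrow> real vec) \<Rightarrow> (nat \<Rightarrow> real vec) \<Rightarrow> real" where
  "bbf I B u v = (\<Sum>i\<in>I. \<Sum>j\<in>I. u i \<bullet> (B i j *\<^sub>v v j))"
definition bmv :: "(nat \<Rightarrow> nat) \<Rightarrow> nat set \<Rightarrow> (nat \<Rightarrow> nat \<Rightarrow> real mat) \<Rightarrow> (nat \<Rightarrow> real vec) \<Rightarrow> nat \<Rightarrow> real vec" where
  "bmv d I B v i = vsum (d i) (\<lambda>j. B i j *\<^sub>v v j) I"

lemma bqf_bbf: "bqf I B v = bbf I B v v" by (simp add: bqf_def bbf_def)

lemma bmv_carrier: "bmv d I B v i \<in> carrier_vec (d i)" by (simp add: bmv_def)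
lemma bv_bmv: "bv d I (bmv d I B v)" by (simp add: bv_def bmv_carrier)

lemma bm_mv: "bm d I B \<Longrightarrow> bv d I v \<Longrightarrow> i \<in> I \<Longrightarrow> j \<in> I \<Longrightarrow> B i j *\<^sub>v v j \<in> carrier_vec (d i)"
  unfolding bm_def bv_def by (meson mult_mat_vec_carrier)

lemma bbf_bmv: assumes "finite I" "bm d I B" "bv d I v"
  shows "bbf I B u v = (\<Sum>i\<in>I. u i \<bullet> bmv d I B v i)"
  unfolding bbf_def bmv_def
proof (rule sum.cong[OF refl])
  fix i assume i: "i \<in> I"
  show "(\<Sum>j\<in>I. u i \<bullet> (B i j *\<^sub>v v j)) = u i \<bullet> vsum (d i) (\<lambda>j. B i j *\<^sub>v v j) I"
    using assms i bm_mv by (intro vsum_dot[symmetric]) auto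
qed

lemma mv_expand: assumes "M \<in> carrier_mat a c" "w \<in> carrier_vec c" "s < a"
  shows "(M *\<^sub>v w) $ s = (\<Sum>t\<in>{0..<c}. M $$ (s,t) * w $ t)"
proof -
  have sM: "s < dim_row M" and cM: "dim_col M = c" using assms by auto
  have "(M *\<^sub>v w) $ s = row M s \<bullet> w" by (rule index_mult_mat_vec[OF sM])
  also have "\<dots> = (\<Sum>t\<in>{0..<c}. row M s $ t * w $ t)" by (rule scalar_prod_expand[OF assms(2)])
  also have "\<dots> = (\<Sum>t\<in>{0..<c}. M $$ (s,t) * w $ t)"
    using sM cM by (intro sum.cong refl) simp
  finally show ?thesis .
qed

lemma bmul_mv: assumes "finite I" "bm d I B" "bm d I C" "i \<in> I" "j \<in> I" "w \<in> carrier_vec (d j)"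
  shows "bmul d I B C i j *\<^sub>v w = vsum (d i) (\<lambda>k. B i k *\<^sub>v (C k j *\<^sub>v w)) I"
proof (rule eq_vecI)
  show "dim_vec (bmul d I B C i j *\<^sub>v w) = dim_vec (vsum (d i) (\<lambda>k. B i k *\<^sub>v (C k j *\<^sub>v w)) I)"
    by (simp add: bmul_def)
  fix s assume "s < dim_vec (vsum (d i) (\<lambda>k. B i k *\<^sub>v (C k j *\<^sub>v w)) I)"
  then have s: "s < d i" by simp
  have Bk: "\<And>k. k \<in> I \<Longrightarrow> B i k \<in> carrier_mat (d i) (d k)" using assms(2,4) unfolding bm_def by auto
  have Ck: "\<And>k. k \<in> I \<Longrightarrow> C k j \<in> carrier_mat (d k) (d j)" using assms(3,5) unfolding bm_def by auto
  have BC: "\<And>k. k \<in> I \<Longrightarrow> B i k * C k j \<in> carrier_mat (d i) (d j)" using Bk Ck by (meson mult_carrier_mat)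
  have bm: "bmul d I B C i j \<in> carrier_mat (d i) (d j)" by (simp add: bmul_def)
  have "(bmul d I B C i j *\<^sub>v w) $ s = (\<Sum>t\<in>{0..<d j}. bmul d I B C i j $$ (s,t) * w $ t)"
    by (rule mv_expand[OF bm assms(6) s])
  also have "\<dots> = (\<Sum>t\<in>{0..<d j}. (\<Sum>k\<in>I. (B i k * C k j) $$ (s,t)) * w $ t)"
    using s by (intro sum.cong refl) (simp add: bmul_def)
  also have "\<dots> = (\<Sum>t\<in>{0..<d j}. \<Sum>k\<in>I. (B i k * C k j) $$ (s,t) * w $ t)"
    by (simp add: sum_distrib_right)
  also have "\<dots> = (\<Sum>k\<in>I. \<Sum>t\<in>{0..<d j}. (B i k * C k j) $$ (s,t) * w $ t)"
    by (rule sum.swap)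
  also have "\<dots> = (\<Sum>k\<in>I. ((B i k * C k j) *\<^sub>v w) $ s)"
    using BC assms(6) s by (intro sum.cong refl mv_expand[symmetric]) auto
  also have "\<dots> = (\<Sum>k\<in>I. (B i k *\<^sub>v (C k j *\<^sub>v w)) $ s)"
  proof (rule sum.cong[OF refl])
    fix k assume k: "k \<in> I"
    show "((B i k * C k j) *\<^sub>v w) $ s = (B i k *\<^sub>v (C k j *\<^sub>v w)) $ s"
      by (subst assoc_mult_mat_vec[OF Bk[OF k] Ck[OF k] assms(6)]) (rule refl)
  qed
  also have "\<dots> = vsum (d i) (\<lambda>k. B i k *\<^sub>v (C k j *\<^sub>v w)) I $ s"
    by (rule index_vsum[OF s, symmetric])
  finally show "(bmul d I B C i j *\<^sub>v w) $ s = vsum (d i) (\<lambda>k. B i k *\<^sub>v (C k j *\<^sub>v w)) I $ s" .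
qed

lemma bmv_bmul: assumes "finite I" "bm d I B" "bm d I C" "bv d I v" "i \<in> I"
  shows "bmv d I (bmul d I B C) v i = bmv d I B (bmv d I C v) i"
proof -
  have Bk: "\<And>k. k \<in> I \<Longrightarrow> B i k \<in> carrier_mat (d i) (d k)" using assms(2,5) unfolding bm_def by auto
  have "bmv d I (bmul d I B C) v i = vsum (d i) (\<lambda>j. vsum (d i) (\<lambda>k. B i k *\<^sub>v (C k j *\<^sub>v v j)) I) I"
    unfolding bmv_def using assms by (intro vsum_cong bmul_mv) (auto simp: bv_def)
  also have "\<dots> = vsum (d i) (\<lambda>k. vsum (d i) (\<lambda>j. B i k *\<^sub>v (C k j *\<^sub>v v j)) I) I"
    by (rule vsum_swap)
  also have "\<dots> = vsum (d i) (\<lambda>k. B i k *\<^sub>v vsum (d k) (\<lambda>j. C k j *\<^sub>v v j) I) I"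
  proof (rule vsum_cong)
    fix k assume k: "k \<in> I"
    show "vsum (d i) (\<lambda>j. B i k *\<^sub>v (C k j *\<^sub>v v j)) I = B i k *\<^sub>v vsum (d k) (\<lambda>j. C k j *\<^sub>v v j) I"
      using assms k Bk bm_mv[OF assms(3,4)] by (intro mat_vsum[symmetric]) auto
  qed
  also have "\<dots> = bmv d I B (bmv d I C v) i" by (simp add: bmv_def)
  finally show ?thesis .
qed

lemma bmv_btrans: assumes "finite I" "bm d I B" "bv d I u" "bv d I v"
  shows "(\<Sum>i\<in>I. u i \<bullet> bmv d I (btrans B) v i) = (\<Sum>k\<in>I. bmv d I B u k \<bullet> v k)"
proof -
  have Bji: "\<And>i j. i \<in> I \<Longrightarrow> j \<in> I \<Longrightarrow> B j i \<in> carrier_mat (d j) (d i)" using assms(2) unfolding bm_def by auto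
  have u: "\<And>i. i \<in> I \<Longrightarrow> u i \<in> carrier_vec (d i)" and v: "\<And>i. i \<in> I \<Longrightarrow> v i \<in> carrier_vec (d i)"
    using assms(3,4) unfolding bv_def by auto
  have "(\<Sum>i\<in>I. u i \<bullet> bmv d I (btrans B) v i) = (\<Sum>i\<in>I. \<Sum>j\<in>I. u i \<bullet> (transpose_mat (B j i) *\<^sub>v v j))"
  proof (rule sum.cong[OF refl])
    fix i assume i: "i \<in> I"
    show "u i \<bullet> bmv d I (btrans B) v i = (\<Sum>j\<in>I. u i \<bullet> (transpose_mat (B j i) *\<^sub>v v j))"
      unfolding bmv_def btrans_def
    proof (rule vsum_dot[OF assms(1)], intro ballI)
      fix j assume j: "j \<in> I"
      have "transpose_mat (B j i) \<in> carrier_mat (d i) (d j)" using Bji[OF i j] by simp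
      then show "transpose_mat (B j i) *\<^sub>v v j \<in> carrier_vec (d i)" using v[OF j] by (rule mult_mat_vec_carrier)
    qed
  qed
  also have "\<dots> = (\<Sum>i\<in>I. \<Sum>j\<in>I. (B j i *\<^sub>v u i) \<bullet> v j)"
  proof (intro sum.cong refl)
    fix i j assume i: "i \<in> I" and j: "j \<in> I"
    have c1: "transpose_mat (B j i) *\<^sub>v v j \<in> carrier_vec (d i)" using Bji[OF i j] v[OF j] by auto
    have c2: "B j i *\<^sub>v u i \<in> carrier_vec (d j)" using Bji[OF i j] u[OF i] by auto
    have "u i \<bullet> (transpose_mat (B j i) *\<^sub>v v j) = (transpose_mat (B j i) *\<^sub>v v j) \<bullet> u i"
      by (rule comm_scalar_prod[OF u[OF i] c1])
    also have "\<dots> = v j \<bullet> (B j i *\<^sub>v u i)" by (rule transpose_vec_mult_scalar[OF Bji[OF i j] u[OF i] v[OF j]])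
    also have "\<dots> = (B j i *\<^sub>v u i) \<bullet> v j" by (rule comm_scalar_prod[OF v[OF j] c2])
    finally show "u i \<bullet> (transpose_mat (B j i) *\<^sub>v v j) = (B j i *\<^sub>v u i) \<bullet> v j" .
  qed
  also have "\<dots> = (\<Sum>j\<in>I. \<Sum>i\<in>I. (B j i *\<^sub>v u i) \<bullet> v j)" by (rule sum.swap)
  also have "\<dots> = (\<Sum>j\<in>I. bmv d I B u j \<bullet> v j)"
  proof (rule sum.cong[OF refl])
    fix j assume j: "j \<in> I"
    show "(\<Sum>i\<in>I. (B j i *\<^sub>v u i) \<bullet> v j) = bmv d I B u j \<bullet> v j"
      unfolding bmv_def using assms(1) Bji j u v by (intro vsum_dot_left[symmetric]) (auto intro: mult_mat_vec_carrier)
  qed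
  finally show ?thesis .
qed

lemma bbf_badd: assumes "bm d I B" "bm d I C" "bv d I u" "bv d I v"
  shows "bbf I (badd B C) u v = bbf I B u v + bbf I C u v"
  unfolding bbf_def sum.distrib[symmetric]
proof (intro sum.cong refl)
  fix i j assume i: "i \<in> I" and j: "j \<in> I"
  have B: "B i j \<in> carrier_mat (d i) (d j)" and C: "C i j \<in> carrier_mat (d i) (d j)"
    using assms i j unfolding bm_def by auto
  have u: "u i \<in> carrier_vec (d i)" and v: "v j \<in> carrier_vec (d j)" using assms i j unfolding bv_def by auto
  have "u i \<bullet> (badd B C i j *\<^sub>v v j) = u i \<bullet> (B i j *\<^sub>v v j + C i j *\<^sub>v v j)"
    unfolding badd_def by (subst add_mult_distrib_mat_vec[OF B C v]) (rule refl)
  also have "\<dots> = u i \<bullet> (B i j *\<^sub>v v j) + u i \<bullet> (C i j *\<^sub>v v j)"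
    by (rule scalar_prod_add_distrib[OF u]) (use B C v in auto)
  finally show "u i \<bullet> (badd B C i j *\<^sub>v v j) = u i \<bullet> (B i j *\<^sub>v v j) + u i \<bullet> (C i j *\<^sub>v v j)" .
qed

lemma bbf_bsub: assumes "bm d I B" "bm d I C" "bv d I u" "bv d I v"
  shows "bbf I (bsub B C) u v = bbf I B u v - bbf I C u v"
  unfolding bbf_def sum_subtractf[symmetric]
proof (intro sum.cong refl)
  fix i j assume i: "i \<in> I" and j: "j \<in> I"
  have B: "B i j \<in> carrier_mat (d i) (d j)" and C: "C i j \<in> carrier_mat (d i) (d j)"
    using assms i j unfolding bm_def by auto
  have u: "u i \<in> carrier_vec (d i)" and v: "v j \<in> carrier_vec (d j)" using assms i j unfolding bv_def by auto
  have "u i \<bullet> (bsub B C i j *\<^sub>v v j) = u i \<bullet> (B i j *\<^sub>v v j - C i j *\<^sub>v v j)"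
    unfolding bsub_def by (subst minus_mult_distrib_mat_vec[OF B C v]) (rule refl)
  also have "\<dots> = u i \<bullet> (B i j *\<^sub>v v j) - u i \<bullet> (C i j *\<^sub>v v j)"
    by (rule scalar_prod_minus_distrib[OF u]) (use B C v in auto)
  finally show "u i \<bullet> (bsub B C i j *\<^sub>v v j) = u i \<bullet> (B i j *\<^sub>v v j) - u i \<bullet> (C i j *\<^sub>v v j)" .
qed

lemma bbf_diff_left: assumes "bm d I B" "bv d I u" "bv d I u'" "bv d I v"
  shows "bbf I B (\<lambda>i. u i - u' i) v = bbf I B u v - bbf I B u' v"
  unfolding bbf_def sum_subtractf[symmetric]
proof (intro sum.cong refl)
  fix i j assume i: "i \<in> I" and j: "j \<in> I"
  have B: "B i j \<in> carrier_mat (d i) (d j)" using assms i j unfolding bm_def by auto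
  have u: "u i \<in> carrier_vec (d i)" "u' i \<in> carrier_vec (d i)" and v: "v j \<in> carrier_vec (d j)"
    using assms i j unfolding bv_def by auto
  show "(u i - u' i) \<bullet> (B i j *\<^sub>v v j) = u i \<bullet> (B i j *\<^sub>v v j) - u' i \<bullet> (B i j *\<^sub>v v j)"
    by (rule minus_scalar_prod_distrib[OF u]) (use B v in auto)
qed

lemma bbf_diff_right: assumes "bm d I B" "bv d I u" "bv d I v" "bv d I v'"
  shows "bbf I B u (\<lambda>i. v i - v' i) = bbf I B u v - bbf I B u v'"
  unfolding bbf_def sum_subtractf[symmetric]
proof (intro sum.cong refl)
  fix i j assume i: "i \<in> I" and j: "j \<in> I"
  have B: "B i j \<in> carrier_mat (d i) (d j)" using assms i j unfolding bm_def by auto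
  have u: "u i \<in> carrier_vec (d i)" and v: "v j \<in> carrier_vec (d j)" "v' j \<in> carrier_vec (d j)"
    using assms i j unfolding bv_def by auto
  have "u i \<bullet> (B i j *\<^sub>v (v j - v' j)) = u i \<bullet> (B i j *\<^sub>v v j - B i j *\<^sub>v v' j)"
    by (subst mult_minus_distrib_mat_vec[OF B v]) (rule refl)
  also have "\<dots> = u i \<bullet> (B i j *\<^sub>v v j) - u i \<bullet> (B i j *\<^sub>v v' j)"
    by (rule scalar_prod_minus_distrib[OF u]) (use B v in auto)
  finally show "u i \<bullet> (B i j *\<^sub>v (v j - v' j)) = u i \<bullet> (B i j *\<^sub>v v j) - u i \<bullet> (B i j *\<^sub>v v' j)" .
qed

lemma bbf_cong: assumes hu: "\<And>i. i \<in> I \<Longrightarrow> u i = u' i" and hv: "\<And>i. i \<in> I \<Longrightarrow> v i = v' i"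
  shows "bbf I B u v = bbf I B u' v'"
  unfolding bbf_def
proof (rule sum.cong[OF refl], rule sum.cong[OF refl])
  fix i j assume i: "i \<in> I" and j: "j \<in> I"
  show "u i \<bullet> (B i j *\<^sub>v v j) = u' i \<bullet> (B i j *\<^sub>v v' j)" unfolding hu[OF i] hv[OF j] by (rule refl)
qed

lemma bbf_sym: assumes "bm d I B" "\<forall>i\<in>I. \<forall>j\<in>I. B i j = transpose_mat (B j i)"
    "bv d I u" "bv d I v"
  shows "bbf I B u v = bbf I B v u"
proof -
  have "bbf I B u v = (\<Sum>i\<in>I. \<Sum>j\<in>I. v j \<bullet> (B j i *\<^sub>v u i))"
    unfolding bbf_def
  proof (rule sum.cong[OF refl], rule sum.cong[OF refl])
    fix i j assume i: "i \<in> I" and j: "j \<in> I"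
    have B: "B j i \<in> carrier_mat (d j) (d i)" using assms(1) i j unfolding bm_def by auto
    have u: "u i \<in> carrier_vec (d i)" and v: "v j \<in> carrier_vec (d j)"
      using assms(3,4) i j unfolding bv_def by auto
    have c1: "transpose_mat (B j i) *\<^sub>v v j \<in> carrier_vec (d i)" using B v by auto
    have "u i \<bullet> (B i j *\<^sub>v v j) = u i \<bullet> (transpose_mat (B j i) *\<^sub>v v j)" by (subst bspec[OF bspec[OF assms(2) i] j]) (rule refl)
    also have "\<dots> = (transpose_mat (B j i) *\<^sub>v v j) \<bullet> u i" by (rule comm_scalar_prod[OF u c1])
    also have "\<dots> = v j \<bullet> (B j i *\<^sub>v u i)" by (rule transpose_vec_mult_scalar[OF B u v])
    finally show "u i \<bullet> (B i j *\<^sub>v v j) = v j \<bullet> (B j i *\<^sub>v u i)" .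
  qed
  also have "\<dots> = bbf I B v u" unfolding bbf_def by (rule sum.swap)
  finally show ?thesis .
qed

lemma bm_btrans: "bm d I B \<Longrightarrow> bm d I (btrans B)"
  unfolding bm_def btrans_def by auto
lemma bm_badd: "bm d I B \<Longrightarrow> bm d I C \<Longrightarrow> bm d I (badd B C)"
  unfolding bm_def badd_def by auto
lemma bm_bmul: "bm d I (bmul d I B C)"
  unfolding bm_def bmul_def by auto

lemma bbf_comm_bmv: assumes "finite I" "bm d I B" "bv d I u" "bv d I v"
  shows "(\<Sum>k\<in>I. bmv d I B u k \<bullet> v k) = bbf I B v u"
proof -
  have "(\<Sum>k\<in>I. bmv d I B u k \<bullet> v k) = (\<Sum>k\<in>I. v k \<bullet> bmv d I B u k)"
    using assms(4) by (intro sum.cong refl comm_scalar_prod[OF bmv_carrier]) (auto simp: bv_def)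
  also have "\<dots> = bbf I B v u" by (rule bbf_bmv[OF assms(1,2,3), symmetric])
  finally show ?thesis .
qed

lemma bv_diff: "bv d I u \<Longrightarrow> bv d I v \<Longrightarrow> bv d I (\<lambda>i. u i - v i)"
  unfolding bv_def by auto

lemma abstract_main:
  assumes fin: "finite I"
  and bmH: "bm d I H" and bmQ: "bm d I Q" and bmM: "bm d I M"
  and Hsym: "\<forall>i\<in>I. \<forall>j\<in>I. H i j = transpose_mat (H j i)"
  and HMQ: "\<And>v i. bv d I v \<Longrightarrow> i \<in> I \<Longrightarrow> bmv d I H (bmv d I M v) i = bmv d I Q v i"
  and a: "bv d I a" and dd: "bv d I dd" and g: "bv d I g"
  and gdef: "\<And>i. i \<in> I \<Longrightarrow> g i = a i - dd i"
  and edef: "\<And>i. i \<in> I \<Longrightarrow> e i = a i - bmv d I M dd i"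
  and VI: "bbf I Q g dd \<ge> 0"
  shows "bbf I H e e \<le> bbf I H a a
     - bbf I (bsub (badd (btrans Q) Q) (bmul d I (btrans M) (bmul d I H M))) dd dd"
proof -
  define Md where "Md = bmv d I M dd"
  have Md: "bv d I Md" unfolding Md_def by (rule bv_bmv)
  have N1: "bbf I (bsub (badd (btrans Q) Q) (bmul d I (btrans M) (bmul d I H M))) dd dd
     = bbf I (badd (btrans Q) Q) dd dd - bbf I (bmul d I (btrans M) (bmul d I H M)) dd dd"
    by (rule bbf_bsub[OF bm_badd[OF bm_btrans[OF bmQ] bmQ] bm_bmul dd dd])
  have N2: "bbf I (badd (btrans Q) Q) dd dd = bbf I (btrans Q) dd dd + bbf I Q dd dd"
    by (rule bbf_badd[OF bm_btrans[OF bmQ] bmQ dd dd])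
  have "bbf I (btrans Q) dd dd = (\<Sum>i\<in>I. dd i \<bullet> bmv d I (btrans Q) dd i)"
    by (rule bbf_bmv[OF fin bm_btrans[OF bmQ] dd])
  also have "\<dots> = (\<Sum>k\<in>I. bmv d I Q dd k \<bullet> dd k)" by (rule bmv_btrans[OF fin bmQ dd dd])
  also have "\<dots> = bbf I Q dd dd" by (rule bbf_comm_bmv[OF fin bmQ dd dd])
  finally have N3: "bbf I (btrans Q) dd dd = bbf I Q dd dd" .
  have "bbf I (bmul d I (btrans M) (bmul d I H M)) dd dd
     = (\<Sum>i\<in>I. dd i \<bullet> bmv d I (bmul d I (btrans M) (bmul d I H M)) dd i)"
    by (rule bbf_bmv[OF fin bm_bmul dd])
  also have "\<dots> = (\<Sum>i\<in>I. dd i \<bullet> bmv d I (btrans M) (bmv d I (bmul d I H M) dd) i)"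
    by (rule sum.cong[OF refl], subst bmv_bmul[OF fin bm_btrans[OF bmM] bm_bmul dd], assumption, rule refl)
  also have "\<dots> = (\<Sum>k\<in>I. bmv d I M dd k \<bullet> bmv d I (bmul d I H M) dd k)"
    by (rule bmv_btrans[OF fin bmM dd bv_bmv])
  also have "\<dots> = (\<Sum>k\<in>I. Md k \<bullet> bmv d I H Md k)"
    unfolding Md_def
    by (rule sum.cong[OF refl], subst bmv_bmul[OF fin bmH bmM dd], assumption, rule refl)
  also have "\<dots> = bbf I H Md Md" by (rule bbf_bmv[OF fin bmH Md, symmetric])
  finally have N4: "bbf I (bmul d I (btrans M) (bmul d I H M)) dd dd = bbf I H Md Md" .
  have "bbf I H e e = bbf I H (\<lambda>i. a i - Md i) (\<lambda>i. a i - Md i)"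
    unfolding Md_def by (rule bbf_cong; rule edef)
  also have "\<dots> = bbf I H a (\<lambda>i. a i - Md i) - bbf I H Md (\<lambda>i. a i - Md i)"
    by (rule bbf_diff_left[OF bmH a Md bv_diff[OF a Md]])
  also have "\<dots> = (bbf I H a a - bbf I H a Md) - (bbf I H Md a - bbf I H Md Md)"
    by (simp only: bbf_diff_right[OF bmH a a Md] bbf_diff_right[OF bmH Md a Md])
  finally have E1: "bbf I H e e = (bbf I H a a - bbf I H a Md) - (bbf I H Md a - bbf I H Md Md)" .
  have E2: "bbf I H Md a = bbf I H a Md" by (rule bbf_sym[OF bmH Hsym Md a])
  have "bbf I H a Md = (\<Sum>i\<in>I. a i \<bullet> bmv d I H Md i)" by (rule bbf_bmv[OF fin bmH Md])
  also have "\<dots> = (\<Sum>i\<in>I. a i \<bullet> bmv d I Q dd i)"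
    unfolding Md_def by (rule sum.cong[OF refl], subst HMQ[OF dd], assumption, rule refl)
  also have "\<dots> = bbf I Q a dd" by (rule bbf_bmv[OF fin bmQ dd, symmetric])
  finally have E3: "bbf I H a Md = bbf I Q a dd" .
  have "bbf I Q g dd = bbf I Q (\<lambda>i. a i - dd i) dd" by (rule bbf_cong) (simp_all add: gdef)
  also have "\<dots> = bbf I Q a dd - bbf I Q dd dd" by (rule bbf_diff_left[OF bmQ a dd dd])
  finally have E4: "bbf I Q g dd = bbf I Q a dd - bbf I Q dd dd" .
  show ?thesis using N1 N2 N3 N4 E1 E2 E3 E4 VI by linarith
qed

lemma zero_mat_mult_vec: "v \<in> carrier_vec b \<Longrightarrow> 0\<^sub>m a b *\<^sub>v v = 0\<^sub>v a"
  by (intro eq_vecI) (auto simp: scalar_prod_expand)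

lemma smult_mat_mult_vec: assumes "A \<in> carrier_mat a b" "v \<in> carrier_vec b"
  shows "(c \<cdot>\<^sub>m A) *\<^sub>v v = c \<cdot>\<^sub>v (A *\<^sub>v (v :: real vec))"
proof (rule eq_vecI)
  show "dim_vec ((c \<cdot>\<^sub>m A) *\<^sub>v v) = dim_vec (c \<cdot>\<^sub>v (A *\<^sub>v v))" by simp
  fix s assume "s < dim_vec (c \<cdot>\<^sub>v (A *\<^sub>v v))"
  then have s: "s < a" using assms by simp
  have cA: "c \<cdot>\<^sub>m A \<in> carrier_mat a b" using assms by simp
  have "((c \<cdot>\<^sub>m A) *\<^sub>v v) $ s = (\<Sum>t\<in>{0..<b}. (c \<cdot>\<^sub>m A) $$ (s,t) * v $ t)"
    by (rule mv_expand[OF cA assms(2) s])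
  also have "\<dots> = (\<Sum>t\<in>{0..<b}. c * (A $$ (s,t) * v $ t))"
    using assms s by (intro sum.cong refl) auto
  also have "\<dots> = c * (A *\<^sub>v v) $ s"
    by (simp add: mv_expand[OF assms s] sum_distrib_left)
  also have "\<dots> = (c \<cdot>\<^sub>v (A *\<^sub>v v)) $ s" using assms s by simp
  finally show "((c \<cdot>\<^sub>m A) *\<^sub>v v) $ s = (c \<cdot>\<^sub>v (A *\<^sub>v v)) $ s" .
qed

lemma transpose_smult: "transpose_mat (c \<cdot>\<^sub>m A) = c \<cdot>\<^sub>m transpose_mat A"
  by (intro eq_matI) auto

lemma bm_H: assumes A: "\<And>i. 1 \<le> i \<Longrightarrow> i \<le> m \<Longrightarrow> A i \<in> carrier_mat l (n i)"
  and P: "\<And>i. 1 \<le> i \<Longrightarrow> i \<le> m \<Longrightarrow> P i \<in> carrier_mat (n i) (n i)"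
  shows "bm (bdim m l n) {1..m+1} (Hblk m l n \<rho> \<gamma> A P)"
  unfolding bm_def
proof (intro ballI)
  fix i j assume i: "i \<in> {1..m+1}" and j: "j \<in> {1..m+1}"
  show "Hblk m l n \<rho> \<gamma> A P i j \<in> carrier_mat (bdim m l n i) (bdim m l n j)"
  proof (cases "i < m \<and> j < m")
    case True
    then show ?thesis using i j A[of i] A[of j] P[of i] by (auto simp: Hblk_def G1blk_def bdim_def)
  next
    case False
    then show ?thesis using i j A[of m] P[of m] by (auto simp: Hblk_def bdim_def)
  qed
qed

lemma bm_Q: assumes A: "\<And>i. 1 \<le> i \<Longrightarrow> i \<le> m \<Longrightarrow> A i \<in> carrier_mat l (n i)"
  and P: "\<And>i. 1 \<le> i \<Longrightarrow> i \<le> m \<Longrightarrow> P i \<in> carrier_mat (n i) (n i)"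
  shows "bm (bdim m l n) {1..m+1} (Qblk m l n \<rho> \<gamma> A P)"
  unfolding bm_def
proof (intro ballI)
  fix i j assume i: "i \<in> {1..m+1}" and j: "j \<in> {1..m+1}"
  show "Qblk m l n \<rho> \<gamma> A P i j \<in> carrier_mat (bdim m l n i) (bdim m l n j)"
  proof (cases "i < m \<and> j < m")
    case True
    then show ?thesis using i j A[of i] A[of j] P[of i] by (auto simp: Qblk_def G1blk_def bdim_def)
  next
    case False
    then show ?thesis using i j A[of m] P[of m] by (auto simp: Qblk_def bdim_def)
  qed
qed

lemma bm_M: assumes A: "\<And>i. 1 \<le> i \<Longrightarrow> i \<le> m \<Longrightarrow> A i \<in> carrier_mat l (n i)" and m: "m \<ge> 1"
  shows "bm (bdim m l n) {1..m+1} (Mblk m l n \<rho> \<gamma> A)"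
  unfolding bm_def
proof (intro ballI)
  fix i j assume i: "i \<in> {1..m+1}" and j: "j \<in> {1..m+1}"
  show "Mblk m l n \<rho> \<gamma> A i j \<in> carrier_mat (bdim m l n i) (bdim m l n j)"
    using i j A[of m] m by (auto simp: Mblk_def bdim_def)
qed

lemma bmv_sub: assumes "finite I" "J \<subseteq> I" "\<forall>j\<in>I-J. B i j = 0\<^sub>m (d i) (d j)" "bv d I v"
  shows "bmv d I B v i = vsum (d i) (\<lambda>j. B i j *\<^sub>v v j) J"
  unfolding bmv_def
proof (rule vsum_zero_out[OF assms(1,2)], intro ballI)
  fix j assume j: "j \<in> I - J"
  have "v j \<in> carrier_vec (d j)" using assms(4) j unfolding bv_def by auto
  then show "B i j *\<^sub>v v j = 0\<^sub>v (d i)" using bspec[OF assms(3) j] by (simp add: zero_mat_mult_vec)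
qed

lemma bmv_one: assumes "finite I" "i0 \<in> I" "\<forall>j\<in>I-{i0}. B i j = 0\<^sub>m (d i) (d j)" "bv d I v"
  "B i i0 \<in> carrier_mat (d i) (d i0)"
  shows "bmv d I B v i = B i i0 *\<^sub>v v i0"
proof -
  have "bmv d I B v i = vsum (d i) (\<lambda>j. B i j *\<^sub>v v j) {i0}"
    by (rule bmv_sub[OF assms(1)]) (use assms in auto)
  also have "\<dots> = B i i0 *\<^sub>v v i0"
    using assms(5) by (intro eq_vecI) (auto simp: index_vsum)
  finally show ?thesis .
qed

lemma bmv_two: assumes "finite I" "i0 \<in> I" "i1 \<in> I" "i0 \<noteq> i1"
  "\<forall>j\<in>I-{i0,i1}. B i j = 0\<^sub>m (d i) (d j)" "bv d I v"
  "B i i0 \<in> carrier_mat (d i) (d i0)" "B i i1 \<in> carrier_mat (d i) (d i1)"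
  shows "bmv d I B v i = B i i0 *\<^sub>v v i0 + B i i1 *\<^sub>v v i1"
proof -
  have "bmv d I B v i = vsum (d i) (\<lambda>j. B i j *\<^sub>v v j) {i0,i1}"
    by (rule bmv_sub[OF assms(1)]) (use assms in auto)
  also have "\<dots> = B i i0 *\<^sub>v v i0 + B i i1 *\<^sub>v v i1"
    using assms(4,7,8) by (intro eq_vecI) (auto simp: index_vsum)
  finally show ?thesis .
qed

lemma alg_m: fixes A P :: "real mat"
  assumes A: "A \<in> carrier_mat l k" and P: "P \<in> carrier_mat k k" and x: "x \<in> carrier_vec k"
    and y: "y \<in> carrier_vec l" and g: "\<gamma> \<noteq> 0"
  shows "(P + (\<rho> / \<gamma>) \<cdot>\<^sub>m (transpose_mat A * A)) *\<^sub>v x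
       + ((1 - \<gamma>) / \<gamma>) \<cdot>\<^sub>m transpose_mat A *\<^sub>v ((- \<rho>) \<cdot>\<^sub>v (A *\<^sub>v x) + \<gamma> \<cdot>\<^sub>v y)
     = (\<rho> \<cdot>\<^sub>m (transpose_mat A * A) + P) *\<^sub>v x + (1 - \<gamma>) \<cdot>\<^sub>m transpose_mat A *\<^sub>v y"
proof -
  have At: "transpose_mat A \<in> carrier_mat k l" using A by simp
  have AA: "transpose_mat A * A \<in> carrier_mat k k" using A by simp
  have Ax: "A *\<^sub>v x \<in> carrier_vec l" using A x by simp
  have X1: "P *\<^sub>v x \<in> carrier_vec k" using P x by simp
  have X2: "transpose_mat A *\<^sub>v (A *\<^sub>v x) \<in> carrier_vec k" using At Ax by simp
  have X3: "transpose_mat A *\<^sub>v y \<in> carrier_vec k" using At y by simp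
  have AAx: "(transpose_mat A * A) *\<^sub>v x = transpose_mat A *\<^sub>v (A *\<^sub>v x)"
    by (rule assoc_mult_mat_vec[OF At A x])
  have L1: "(P + (\<rho> / \<gamma>) \<cdot>\<^sub>m (transpose_mat A * A)) *\<^sub>v x = P *\<^sub>v x + (\<rho> / \<gamma>) \<cdot>\<^sub>v (transpose_mat A *\<^sub>v (A *\<^sub>v x))"
    using P AA x by (simp add: add_mult_distrib_mat_vec[of _ k k] smult_mat_mult_vec[OF AA x] AAx)
  have L2: "((1 - \<gamma>) / \<gamma>) \<cdot>\<^sub>m transpose_mat A *\<^sub>v ((- \<rho>) \<cdot>\<^sub>v (A *\<^sub>v x) + \<gamma> \<cdot>\<^sub>v y)
     = ((1 - \<gamma>) / \<gamma>) \<cdot>\<^sub>v ((- \<rho>) \<cdot>\<^sub>v (transpose_mat A *\<^sub>v (A *\<^sub>v x)) + \<gamma> \<cdot>\<^sub>v (transpose_mat A *\<^sub>v y))"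
    using At Ax y
    by (simp add: smult_mat_mult_vec[OF At] mult_add_distrib_mat_vec[OF At] mult_mat_vec[OF At])
  have R1: "(\<rho> \<cdot>\<^sub>m (transpose_mat A * A) + P) *\<^sub>v x = \<rho> \<cdot>\<^sub>v (transpose_mat A *\<^sub>v (A *\<^sub>v x)) + P *\<^sub>v x"
    using P AA x by (simp add: add_mult_distrib_mat_vec[of _ k k] smult_mat_mult_vec[OF AA x] AAx)
  have R2: "(1 - \<gamma>) \<cdot>\<^sub>m transpose_mat A *\<^sub>v y = (1 - \<gamma>) \<cdot>\<^sub>v (transpose_mat A *\<^sub>v y)"
    by (rule smult_mat_mult_vec[OF At y])
  show ?thesis unfolding L1 L2 R1 R2
  proof (rule eq_vecI)
    fix r assume "r < dim_vec (\<rho> \<cdot>\<^sub>v (transpose_mat A *\<^sub>v (A *\<^sub>v x)) + P *\<^sub>v x + (1 - \<gamma>) \<cdot>\<^sub>v (transpose_mat A *\<^sub>v y))"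
    then have r: "r < k" using A by simp
    show "(P *\<^sub>v x + (\<rho> / \<gamma>) \<cdot>\<^sub>v (transpose_mat A *\<^sub>v (A *\<^sub>v x)) +
          ((1 - \<gamma>) / \<gamma>) \<cdot>\<^sub>v ((- \<rho>) \<cdot>\<^sub>v (transpose_mat A *\<^sub>v (A *\<^sub>v x)) + \<gamma> \<cdot>\<^sub>v (transpose_mat A *\<^sub>v y))) $ r =
         (\<rho> \<cdot>\<^sub>v (transpose_mat A *\<^sub>v (A *\<^sub>v x)) + P *\<^sub>v x + (1 - \<gamma>) \<cdot>\<^sub>v (transpose_mat A *\<^sub>v y)) $ r"
      using r X1 X2 X3 g P A by (simp add: field_simps)
  qed (use X1 X2 X3 in simp)
qed

lemma alg_top: fixes A :: "real mat"
  assumes A: "A \<in> carrier_mat l k" and x: "x \<in> carrier_vec k"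
    and y: "y \<in> carrier_vec l" and g: "\<gamma> \<noteq> 0" and rh: "\<rho> \<noteq> 0"
  shows "((1 - \<gamma>) / \<gamma>) \<cdot>\<^sub>m A *\<^sub>v x + (1 / (\<gamma> * \<rho>)) \<cdot>\<^sub>m 1\<^sub>m l *\<^sub>v ((- \<rho>) \<cdot>\<^sub>v (A *\<^sub>v x) + \<gamma> \<cdot>\<^sub>v y)
     = - A *\<^sub>v x + (1 / \<rho>) \<cdot>\<^sub>m 1\<^sub>m l *\<^sub>v y"
proof -
  have Ax: "A *\<^sub>v x \<in> carrier_vec l" using A x by simp
  have I: "1\<^sub>m l \<in> carrier_mat l l" by simp
  have L1: "((1 - \<gamma>) / \<gamma>) \<cdot>\<^sub>m A *\<^sub>v x = ((1 - \<gamma>) / \<gamma>) \<cdot>\<^sub>v (A *\<^sub>v x)" by (rule smult_mat_mult_vec[OF A x])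
  have L2: "(1 / (\<gamma> * \<rho>)) \<cdot>\<^sub>m 1\<^sub>m l *\<^sub>v ((- \<rho>) \<cdot>\<^sub>v (A *\<^sub>v x) + \<gamma> \<cdot>\<^sub>v y)
     = (1 / (\<gamma> * \<rho>)) \<cdot>\<^sub>v ((- \<rho>) \<cdot>\<^sub>v (A *\<^sub>v x) + \<gamma> \<cdot>\<^sub>v y)"
    using Ax y by (subst smult_mat_mult_vec[OF I]) auto
  have R1: "- A *\<^sub>v x = - (A *\<^sub>v x)" using A x by simp
  have R2: "(1 / \<rho>) \<cdot>\<^sub>m 1\<^sub>m l *\<^sub>v y = (1 / \<rho>) \<cdot>\<^sub>v y" using y by (subst smult_mat_mult_vec[OF I]) auto
  show ?thesis unfolding L1 L2 R1 R2
  proof (rule eq_vecI)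
    fix r assume "r < dim_vec (- (A *\<^sub>v x) + (1 / \<rho>) \<cdot>\<^sub>v y)"
    then have r: "r < l" using y by simp
    show "(((1 - \<gamma>) / \<gamma>) \<cdot>\<^sub>v (A *\<^sub>v x) + (1 / (\<gamma> * \<rho>)) \<cdot>\<^sub>v ((- \<rho>) \<cdot>\<^sub>v (A *\<^sub>v x) + \<gamma> \<cdot>\<^sub>v y)) $ r
       = (- (A *\<^sub>v x) + (1 / \<rho>) \<cdot>\<^sub>v y) $ r"
      using r Ax y g rh A by (simp add: field_simps)
  qed (use Ax y in simp)
qed

lemma bv_at: "bv d I v \<Longrightarrow> i \<in> I \<Longrightarrow> v i \<in> carrier_vec (d i)" unfolding bv_def by auto
lemma bdim_low: "i \<le> m \<Longrightarrow> bdim m l n i = n i" by (simp add: bdim_def)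
lemma bdim_top: "bdim m l n (Suc m) = l" by (simp add: bdim_def)

lemma Mv_low: assumes m: "m \<ge> 2" and v: "bv (bdim m l n) {1..m+1} v" and i: "i \<in> {1..m}"
  shows "bmv (bdim m l n) {1..m+1} (Mblk m l n \<rho> \<gamma> A) v i = v i"
proof -
  have vi: "v i \<in> carrier_vec (n i)" using bv_at[OF v, of i] i by (simp add: bdim_low)
  have "bmv (bdim m l n) {1..m+1} (Mblk m l n \<rho> \<gamma> A) v i = Mblk m l n \<rho> \<gamma> A i i *\<^sub>v v i"
    by (rule bmv_one[OF _ _ _ v]) (use i in \<open>auto simp: Mblk_def bdim_low\<close>)
  also have "\<dots> = v i" using i vi by (simp add: Mblk_def)
  finally show ?thesis .
qed

lemma Mv_top: assumes m: "m \<ge> 2" and v: "bv (bdim m l n) {1..m+1} v"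
  and A: "A m \<in> carrier_mat l (n m)"
  shows "bmv (bdim m l n) {1..m+1} (Mblk m l n \<rho> \<gamma> A) v (m+1) = (- \<rho>) \<cdot>\<^sub>v (A m *\<^sub>v v m) + \<gamma> \<cdot>\<^sub>v v (m+1)"
proof -
  have vm: "v m \<in> carrier_vec (n m)" using bv_at[OF v, of m] m by (simp add: bdim_low)
  have vy: "v (m+1) \<in> carrier_vec l" using bv_at[OF v, of "m+1"] m by (simp add: bdim_top)
  have "bmv (bdim m l n) {1..m+1} (Mblk m l n \<rho> \<gamma> A) v (m+1)
      = Mblk m l n \<rho> \<gamma> A (m+1) m *\<^sub>v v m + Mblk m l n \<rho> \<gamma> A (m+1) (m+1) *\<^sub>v v (m+1)"
    by (rule bmv_two[OF _ _ _ _ _ v]) (use m A in \<open>auto simp: Mblk_def bdim_def\<close>)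
  also have "\<dots> = ((- \<rho>) \<cdot>\<^sub>m A m) *\<^sub>v v m + (\<gamma> \<cdot>\<^sub>m 1\<^sub>m l) *\<^sub>v v (m+1)"
    using m by (simp add: Mblk_def)
  also have "\<dots> = (- \<rho>) \<cdot>\<^sub>v (A m *\<^sub>v v m) + \<gamma> \<cdot>\<^sub>v v (m+1)"
    using A vm vy by (simp add: smult_mat_mult_vec[OF A vm] smult_mat_mult_vec[of "1\<^sub>m l" l l])
  finally show ?thesis .
qed


lemma HMQ:
  assumes m: "m \<ge> 2" and A: "\<And>i. 1 \<le> i \<Longrightarrow> i \<le> m \<Longrightarrow> A i \<in> carrier_mat l (n i)"
  and P: "\<And>i. 1 \<le> i \<Longrightarrow> i \<le> m \<Longrightarrow> P i \<in> carrier_mat (n i) (n i)"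
  and g: "\<gamma> \<noteq> 0" and rh: "\<rho> \<noteq> 0"
  and v: "bv (bdim m l n) {1..m+1} v" and i: "i \<in> {1..m+1}"
  shows "bmv (bdim m l n) {1..m+1} (Hblk m l n \<rho> \<gamma> A P) (bmv (bdim m l n) {1..m+1} (Mblk m l n \<rho> \<gamma> A) v) i
       = bmv (bdim m l n) {1..m+1} (Qblk m l n \<rho> \<gamma> A P) v i"
proof -
  let ?d = "bdim m l n" and ?I = "{1..m+1}"
  let ?w = "bmv ?d ?I (Mblk m l n \<rho> \<gamma> A) v"
  have w: "bv ?d ?I ?w" by (rule bv_bmv)
  have Am: "A m \<in> carrier_mat l (n m)" using A m by simp
  have Pm: "P m \<in> carrier_mat (n m) (n m)" using P m by simp
  have vm: "v m \<in> carrier_vec (n m)" using bv_at[OF v, of m] m by (simp add: bdim_low)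
  have vy: "v (m+1) \<in> carrier_vec l" using bv_at[OF v, of "m+1"] m by (simp add: bdim_top)
  have wlow: "\<And>j. j \<in> {1..m} \<Longrightarrow> ?w j = v j" by (rule Mv_low[OF m v])
  have wtop: "?w (m+1) = (- \<rho>) \<cdot>\<^sub>v (A m *\<^sub>v v m) + \<gamma> \<cdot>\<^sub>v v (m+1)" by (rule Mv_top[where A=A, OF m v Am])
  consider "i < m" | "i = m" | "i = m + 1" using i by fastforce
  then show ?thesis
  proof cases
    case 1
    have "bmv ?d ?I (Hblk m l n \<rho> \<gamma> A P) ?w i = vsum (?d i) (\<lambda>j. Hblk m l n \<rho> \<gamma> A P i j *\<^sub>v ?w j) {1..m-1}"
      by (rule bmv_sub[OF _ _ _ w]) (use 1 in \<open>auto simp: Hblk_def\<close>)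
    also have "\<dots> = vsum (?d i) (\<lambda>j. Qblk m l n \<rho> \<gamma> A P i j *\<^sub>v v j) {1..m-1}"
    proof (rule vsum_cong)
      fix j assume j: "j \<in> {1..m-1}"
      then have "j \<in> {1..m}" by auto
      then have "?w j = v j" by (rule wlow)
      then show "Hblk m l n \<rho> \<gamma> A P i j *\<^sub>v ?w j = Qblk m l n \<rho> \<gamma> A P i j *\<^sub>v v j"
        using 1 j by (simp add: Hblk_def Qblk_def)
    qed
    also have "\<dots> = bmv ?d ?I (Qblk m l n \<rho> \<gamma> A P) v i"
      by (rule bmv_sub[OF _ _ _ v, symmetric]) (use 1 in \<open>auto simp: Qblk_def\<close>)
    finally show ?thesis .
  next
    case 2
    have "bmv ?d ?I (Hblk m l n \<rho> \<gamma> A P) ?w i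
        = Hblk m l n \<rho> \<gamma> A P m m *\<^sub>v ?w m + Hblk m l n \<rho> \<gamma> A P m (m+1) *\<^sub>v ?w (m+1)"
      unfolding 2 by (rule bmv_two[OF _ _ _ _ _ w]) (use m Am Pm in \<open>auto simp: Hblk_def bdim_def\<close>)
    also have "\<dots> = (P m + (\<rho> / \<gamma>) \<cdot>\<^sub>m (transpose_mat (A m) * A m)) *\<^sub>v v m
       + ((1 - \<gamma>) / \<gamma>) \<cdot>\<^sub>m transpose_mat (A m) *\<^sub>v ((- \<rho>) \<cdot>\<^sub>v (A m *\<^sub>v v m) + \<gamma> \<cdot>\<^sub>v v (m+1))"
      using wlow[of m] wtop m by (simp add: Hblk_def)
    also have "\<dots> = (\<rho> \<cdot>\<^sub>m (transpose_mat (A m) * A m) + P m) *\<^sub>v v m + (1 - \<gamma>) \<cdot>\<^sub>m transpose_mat (A m) *\<^sub>v v (m+1)"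
      by (rule alg_m[OF Am Pm vm vy g])
    also have "\<dots> = Qblk m l n \<rho> \<gamma> A P m m *\<^sub>v v m + Qblk m l n \<rho> \<gamma> A P m (m+1) *\<^sub>v v (m+1)"
      using m by (simp add: Qblk_def)
    also have "\<dots> = bmv ?d ?I (Qblk m l n \<rho> \<gamma> A P) v i"
      unfolding 2 by (rule bmv_two[OF _ _ _ _ _ v, symmetric]) (use m Am Pm in \<open>auto simp: Qblk_def bdim_def\<close>)
    finally show ?thesis .
  next
    case 3
    have "bmv ?d ?I (Hblk m l n \<rho> \<gamma> A P) ?w i
        = Hblk m l n \<rho> \<gamma> A P (m+1) m *\<^sub>v ?w m + Hblk m l n \<rho> \<gamma> A P (m+1) (m+1) *\<^sub>v ?w (m+1)"
      unfolding 3 by (rule bmv_two[OF _ _ _ _ _ w]) (use m Am Pm in \<open>auto simp: Hblk_def bdim_def\<close>)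
    also have "\<dots> = ((1 - \<gamma>) / \<gamma>) \<cdot>\<^sub>m A m *\<^sub>v v m + (1 / (\<gamma> * \<rho>)) \<cdot>\<^sub>m 1\<^sub>m l *\<^sub>v ((- \<rho>) \<cdot>\<^sub>v (A m *\<^sub>v v m) + \<gamma> \<cdot>\<^sub>v v (m+1))"
      using wlow[of m] wtop m by (simp add: Hblk_def)
    also have "\<dots> = - A m *\<^sub>v v m + (1 / \<rho>) \<cdot>\<^sub>m 1\<^sub>m l *\<^sub>v v (m+1)"
      by (rule alg_top[OF Am vm vy g rh])
    also have "\<dots> = Qblk m l n \<rho> \<gamma> A P (m+1) m *\<^sub>v v m + Qblk m l n \<rho> \<gamma> A P (m+1) (m+1) *\<^sub>v v (m+1)"
      using m by (simp add: Qblk_def)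
    also have "\<dots> = bmv ?d ?I (Qblk m l n \<rho> \<gamma> A P) v i"
      unfolding 3 by (rule bmv_two[OF _ _ _ _ _ v, symmetric]) (use m Am Pm in \<open>auto simp: Qblk_def bdim_def\<close>)
    finally show ?thesis .
  qed
qed

lemma Hsym:
  assumes m: "m \<ge> 2" and A: "\<And>i. 1 \<le> i \<Longrightarrow> i \<le> m \<Longrightarrow> A i \<in> carrier_mat l (n i)"
  and Ps: "\<And>i. 1 \<le> i \<Longrightarrow> i \<le> m \<Longrightarrow> transpose_mat (P i) = P i"
  and P: "\<And>i. 1 \<le> i \<Longrightarrow> i \<le> m \<Longrightarrow> P i \<in> carrier_mat (n i) (n i)"
  shows "\<forall>i\<in>{1..m+1}. \<forall>j\<in>{1..m+1}. Hblk m l n \<rho> \<gamma> A P i j = transpose_mat (Hblk m l n \<rho> \<gamma> A P j i)"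
proof (intro ballI)
  fix i j assume i: "i \<in> {1..m+1}" and j: "j \<in> {1..m+1}"
  show "Hblk m l n \<rho> \<gamma> A P i j = transpose_mat (Hblk m l n \<rho> \<gamma> A P j i)"
  proof (cases "i < m \<and> j < m")
    case True
    show ?thesis
    proof (cases "i = j")
      case True
      then show ?thesis using \<open>i < m \<and> j < m\<close> i Ps[of i] by (simp add: Hblk_def G1blk_def)
    next
      case False
      have Ai: "A i \<in> carrier_mat l (n i)" and Aj: "A j \<in> carrier_mat l (n j)" using True i j A by auto
      have "transpose_mat (transpose_mat (A j) * A i) = transpose_mat (A i) * A j"
        using transpose_mult[of "transpose_mat (A j)" "n j" l "A i" "n i"] Ai Aj by simp
      then show ?thesis using True False by (simp add: Hblk_def G1blk_def transpose_smult)
    qed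
  next
    case False
    have Am: "A m \<in> carrier_mat l (n m)" using A m by simp
    have Pm: "P m \<in> carrier_mat (n m) (n m)" using P m by simp
    have tAA: "transpose_mat (transpose_mat (A m) * A m) = transpose_mat (A m) * A m"
      using transpose_mult[of "transpose_mat (A m)" "n m" l "A m" "n m"] Am by simp
    have tmm: "transpose_mat (P m + (\<rho> / \<gamma>) \<cdot>\<^sub>m (transpose_mat (A m) * A m)) = P m + (\<rho> / \<gamma>) \<cdot>\<^sub>m (transpose_mat (A m) * A m)"
      using transpose_add[of "P m" "n m" "n m" "(\<rho> / \<gamma>) \<cdot>\<^sub>m (transpose_mat (A m) * A m)"] Am Pm Ps[of m] m tAA
      by (simp add: transpose_smult)
    consider "i = m" "j = m" | "i = m" "j = m+1" | "i = m+1" "j = m" | "i = m+1" "j = m+1"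
      | "i < m \<or> j < m" using False i j by fastforce
    then show ?thesis
    proof cases
      case 1 then show ?thesis using tmm by (simp add: Hblk_def)
    next
      case 2 then show ?thesis using m by (simp add: Hblk_def transpose_smult)
    next
      case 3 then show ?thesis using m by (simp add: Hblk_def transpose_smult)
    next
      case 4 then show ?thesis using m by (simp add: Hblk_def transpose_smult)
    next
      case 5
      then have "\<not> (i < m \<and> j < m)" "\<not> (j < m \<and> i < m)" using False by auto
      moreover have "i \<noteq> j" using 5 i j False by auto
      moreover have "\<not> (i = m \<and> j = m + 1)" "\<not> (i = m + 1 \<and> j = m)" using 5 by auto
      moreover have "\<not> (j = m \<and> i = m + 1)" "\<not> (j = m + 1 \<and> i = m)" using 5 by auto
      ultimately show ?thesis unfolding Hblk_def by auto
    qed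
  qed
qed

lemma sqn_expand: fixes u w :: "real vec" assumes u: "u \<in> carrier_vec k" and w: "w \<in> carrier_vec k"
  shows "sqn (u + t \<cdot>\<^sub>v w) = sqn u + 2 * t * (u \<bullet> w) + t^2 * sqn w"
proof -
  have tw: "t \<cdot>\<^sub>v w \<in> carrier_vec k" using w by simp
  have "sqn (u + t \<cdot>\<^sub>v w) = u \<bullet> (u + t \<cdot>\<^sub>v w) + (t \<cdot>\<^sub>v w) \<bullet> (u + t \<cdot>\<^sub>v w)"
    unfolding sqn_def by (rule add_scalar_prod_distrib[OF u tw]) (use u w in simp)
  also have "\<dots> = (u \<bullet> u + u \<bullet> (t \<cdot>\<^sub>v w)) + ((t \<cdot>\<^sub>v w) \<bullet> u + (t \<cdot>\<^sub>v w) \<bullet> (t \<cdot>\<^sub>v w))"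
    by (simp only: scalar_prod_add_distrib[OF u u tw] scalar_prod_add_distrib[OF tw u tw])
  also have "\<dots> = u \<bullet> u + t * (u \<bullet> w) + t * (w \<bullet> u) + t * (t * (w \<bullet> w))"
    using u w by simp
  also have "w \<bullet> u = u \<bullet> w" by (rule comm_scalar_prod[OF w u])
  finally show ?thesis unfolding sqn_def by (simp add: power2_eq_square algebra_simps)
qed

lemma gnorm_expand: fixes P :: "real mat"
  assumes P: "P \<in> carrier_mat k k" and Ps: "transpose_mat P = P"
    and p: "p \<in> carrier_vec k" and h: "h \<in> carrier_vec k"
  shows "gnorm2 P (p + t \<cdot>\<^sub>v h) = gnorm2 P p + 2 * t * (h \<bullet> (P *\<^sub>v p)) + t^2 * gnorm2 P h"
proof -
  have th: "t \<cdot>\<^sub>v h \<in> carrier_vec k" using h by simp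
  have Pp: "P *\<^sub>v p \<in> carrier_vec k" and Ph: "P *\<^sub>v h \<in> carrier_vec k" using P p h by auto
  have Pth: "P *\<^sub>v (t \<cdot>\<^sub>v h) = t \<cdot>\<^sub>v (P *\<^sub>v h)" by (rule mult_mat_vec[OF P h])
  have e1: "P *\<^sub>v (p + t \<cdot>\<^sub>v h) = P *\<^sub>v p + t \<cdot>\<^sub>v (P *\<^sub>v h)"
    by (simp only: mult_add_distrib_mat_vec[OF P p th] Pth)
  have tPh: "t \<cdot>\<^sub>v (P *\<^sub>v h) \<in> carrier_vec k" using Ph by simp
  have "gnorm2 P (p + t \<cdot>\<^sub>v h) = (p + t \<cdot>\<^sub>v h) \<bullet> (P *\<^sub>v p + t \<cdot>\<^sub>v (P *\<^sub>v h))"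
    unfolding gnorm2_def e1 by (rule refl)
  also have "\<dots> = p \<bullet> (P *\<^sub>v p + t \<cdot>\<^sub>v (P *\<^sub>v h)) + (t \<cdot>\<^sub>v h) \<bullet> (P *\<^sub>v p + t \<cdot>\<^sub>v (P *\<^sub>v h))"
    by (rule add_scalar_prod_distrib[OF p th]) (use Pp tPh in simp)
  also have "\<dots> = (p \<bullet> (P *\<^sub>v p) + p \<bullet> (t \<cdot>\<^sub>v (P *\<^sub>v h))) + ((t \<cdot>\<^sub>v h) \<bullet> (P *\<^sub>v p) + (t \<cdot>\<^sub>v h) \<bullet> (t \<cdot>\<^sub>v (P *\<^sub>v h)))"
    by (simp only: scalar_prod_add_distrib[OF p Pp tPh] scalar_prod_add_distrib[OF th Pp tPh])
  also have "\<dots> = p \<bullet> (P *\<^sub>v p) + t * (p \<bullet> (P *\<^sub>v h)) + t * (h \<bullet> (P *\<^sub>v p)) + t * (t * (h \<bullet> (P *\<^sub>v h)))"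
    using p h Pp Ph by simp
  also have "p \<bullet> (P *\<^sub>v h) = h \<bullet> (P *\<^sub>v p)"
  proof -
    have "p \<bullet> (P *\<^sub>v h) = (transpose_mat P *\<^sub>v p) \<bullet> h" by (rule transpose_vec_mult_scalar[OF P h p, symmetric])
    also have "\<dots> = (P *\<^sub>v p) \<bullet> h" using Ps by simp
    also have "\<dots> = h \<bullet> (P *\<^sub>v p)" by (rule comm_scalar_prod[OF Pp h])
    finally show ?thesis .
  qed
  finally show ?thesis unfolding gnorm2_def by (simp add: power2_eq_square algebra_simps)
qed

lemma small_t: fixes G C :: real
  assumes "\<And>t. 0 < t \<Longrightarrow> t \<le> 1 \<Longrightarrow> 0 \<le> t * G + t^2 * C"
  shows "0 \<le> G"
proof (rule ccontr)
  assume "\<not> 0 \<le> G" then have G: "G < 0" by simp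
  show False
  proof (cases "C \<le> 0")
    case True
    have "0 \<le> 1 * G + 1^2 * C" using assms[of 1] by simp
    then show False using G True by simp
  next
    case False
    define t where "t = min 1 (- G / (2 * C))"
    have t0: "0 < t" using G False by (simp add: t_def divide_neg_pos)
    have t1: "t \<le> 1" by (simp add: t_def)
    have tC: "t * C \<le> - G / 2" using False
      by (simp add: t_def min_def field_simps)
    have "0 \<le> t * G + t^2 * C" using assms t0 t1 by simp
    also have "t * G + t^2 * C = t * (G + t * C)" by (simp add: power2_eq_square algebra_simps)
    finally have "0 \<le> G + t * C" using t0 by (simp add: zero_le_mult_iff)
    then show False using tC G by linarith
  qed
qed

lemma argmin_VI:
  fixes \<theta> :: "real vec \<Rightarrow> real" and F :: "real vec \<Rightarrow> real vec" and A P :: "real mat"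
  assumes th: "convex_vfun k \<theta>" and X: "convex_vset k X"
    and A: "A \<in> carrier_mat l k" and c: "c \<in> carrier_vec l"
    and F: "\<And>z. z \<in> carrier_vec k \<Longrightarrow> F z = A *\<^sub>v z + c"
    and P: "P \<in> carrier_mat k k" and Ps: "transpose_mat P = P" and x0: "x0 \<in> carrier_vec k"
    and rho: "\<rho> \<ge> 0"
    and am: "is_arg_min (\<lambda>z. \<theta> z + \<rho> / 2 * sqn (F z) + 1 / 2 * gnorm2 P (z - x0)) (\<lambda>z. z \<in> X) zs"
    and z: "z \<in> X"
  shows "\<theta> z - \<theta> zs + (z - zs) \<bullet> (\<rho> \<cdot>\<^sub>v (transpose_mat A *\<^sub>v (A *\<^sub>v zs + c)) + P *\<^sub>v (zs - x0)) \<ge> 0"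
proof -
  define f where "f = (\<lambda>z. \<theta> z + \<rho> / 2 * sqn (F z) + 1 / 2 * gnorm2 P (z - x0))"
  have Xc: "X \<subseteq> carrier_vec k" using X unfolding convex_vset_def by auto
  have zsX: "zs \<in> X" and zsmin: "\<And>y. y \<in> X \<Longrightarrow> f zs \<le> f y"
    using am unfolding is_arg_min_def f_def by (auto simp: not_less)
  have zs: "zs \<in> carrier_vec k" using zsX Xc by auto
  have zc: "z \<in> carrier_vec k" using z Xc by auto
  define h where "h = z - zs"
  define u where "u = A *\<^sub>v zs + c"
  define p where "p = zs - x0"
  define w where "w = A *\<^sub>v h"
  have h: "h \<in> carrier_vec k" unfolding h_def using zc zs by simp
  have u: "u \<in> carrier_vec l" unfolding u_def using A zs c by simp
  have p: "p \<in> carrier_vec k" unfolding p_def using zs x0 by simp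
  have w: "w \<in> carrier_vec l" unfolding w_def using A h by simp
  have Pp: "P *\<^sub>v p \<in> carrier_vec k" using P p by simp
  define G where "G = \<theta> z - \<theta> zs + \<rho> * (u \<bullet> w) + h \<bullet> (P *\<^sub>v p)"
  define C where "C = \<rho> / 2 * sqn w + 1 / 2 * gnorm2 P h"
  have key: "0 \<le> t * G + t^2 * C" if t0: "0 < t" and t1: "t \<le> 1" for t
  proof -
    define zt where "zt = t \<cdot>\<^sub>v z + (1 - t) \<cdot>\<^sub>v zs"
    have ztX: "zt \<in> X" using X z zsX t0 t1 unfolding convex_vset_def zt_def by auto
    have zt1: "zt = zs + t \<cdot>\<^sub>v h"
      unfolding zt_def h_def
      by (rule eq_vecI) (use zc zs in \<open>auto simp: algebra_simps\<close>)
    have ztc: "zt \<in> carrier_vec k" using ztX Xc by auto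
    have Fzt: "F zt = u + t \<cdot>\<^sub>v w"
    proof -
      have th': "t \<cdot>\<^sub>v h \<in> carrier_vec k" using h by simp
      have "F zt = A *\<^sub>v (zs + t \<cdot>\<^sub>v h) + c" using F[OF ztc] zt1 by simp
      also have "\<dots> = (A *\<^sub>v zs + t \<cdot>\<^sub>v w) + c"
        unfolding w_def by (simp only: mult_add_distrib_mat_vec[OF A zs th'] mult_mat_vec[OF A h])
      also have "\<dots> = u + t \<cdot>\<^sub>v w" unfolding u_def
        by (rule eq_vecI) (use A zs c w in \<open>auto simp: algebra_simps\<close>)
      finally show ?thesis .
    qed
    have Fzs: "F zs = u" unfolding u_def by (rule F[OF zs])
    have zt2: "zt - x0 = p + t \<cdot>\<^sub>v h"
      unfolding zt1 p_def by (rule eq_vecI) (use zs x0 h in \<open>auto simp: algebra_simps\<close>)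
    have thz: "\<theta> zt \<le> t * \<theta> z + (1 - t) * \<theta> zs"
      using th zc zs t0 t1 unfolding convex_vfun_def zt_def by auto
    have "f zs \<le> f zt" by (rule zsmin[OF ztX])
    then have "\<theta> zs + \<rho> / 2 * sqn u + 1 / 2 * gnorm2 P p
       \<le> \<theta> zt + \<rho> / 2 * (sqn u + 2 * t * (u \<bullet> w) + t^2 * sqn w)
          + 1 / 2 * (gnorm2 P p + 2 * t * (h \<bullet> (P *\<^sub>v p)) + t^2 * gnorm2 P h)"
      unfolding f_def Fzt Fzs zt2 p_def[symmetric]
      by (simp only: sqn_expand[OF u w] gnorm_expand[OF P Ps p h])
    then show ?thesis using thz unfolding G_def C_def by (simp add: algebra_simps)
  qed
  have G0: "0 \<le> G" by (rule small_t[OF key])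
  have "(z - zs) \<bullet> (\<rho> \<cdot>\<^sub>v (transpose_mat A *\<^sub>v (A *\<^sub>v zs + c)) + P *\<^sub>v (zs - x0))
      = h \<bullet> (\<rho> \<cdot>\<^sub>v (transpose_mat A *\<^sub>v u)) + h \<bullet> (P *\<^sub>v p)"
    unfolding h_def[symmetric] u_def[symmetric] p_def[symmetric]
    by (rule scalar_prod_add_distrib[OF h]) (use A u Pp in simp_all)
  also have "h \<bullet> (\<rho> \<cdot>\<^sub>v (transpose_mat A *\<^sub>v u)) = \<rho> * (u \<bullet> w)"
  proof -
    have Au: "transpose_mat A *\<^sub>v u \<in> carrier_vec k" using A u by simp
    have "h \<bullet> (\<rho> \<cdot>\<^sub>v (transpose_mat A *\<^sub>v u)) = \<rho> * (h \<bullet> (transpose_mat A *\<^sub>v u))"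
      using h Au by simp
    also have "h \<bullet> (transpose_mat A *\<^sub>v u) = (transpose_mat A *\<^sub>v u) \<bullet> h" by (rule comm_scalar_prod[OF h Au])
    also have "\<dots> = u \<bullet> w" unfolding w_def by (rule transpose_vec_mult_scalar[OF A h u])
    finally show ?thesis .
  qed
  finally show ?thesis using G0 unfolding G_def by linarith
qed

lemma grad_j:
  fixes A P :: "nat \<Rightarrow> real mat" and xk xb :: "nat \<Rightarrow> real vec"
  assumes m: "m \<ge> 2" and j: "1 \<le> j" "j < m"
    and A: "\<And>i. 1 \<le> i \<Longrightarrow> i \<le> m \<Longrightarrow> A i \<in> carrier_mat l (n i)"
    and Pj: "P j \<in> carrier_mat (n j) (n j)"
    and xk: "\<And>i. 1 \<le> i \<Longrightarrow> i \<le> m \<Longrightarrow> xk i \<in> carrier_vec (n i)"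
    and xb: "\<And>i. 1 \<le> i \<Longrightarrow> i \<le> m \<Longrightarrow> xb i \<in> carrier_vec (n i)"
    and yk: "yk \<in> carrier_vec l" and b: "b \<in> carrier_vec l" and rh: "\<rho> \<noteq> 0"
  shows "\<rho> \<cdot>\<^sub>v (transpose_mat (A j) *\<^sub>v (A j *\<^sub>v xb j
            + (vsum l (\<lambda>i. A i *\<^sub>v xk i) ({1..m} - {j}) - b - (1 / \<rho>) \<cdot>\<^sub>v yk)))
        + P j *\<^sub>v (xb j - xk j)
     = - (transpose_mat (A j) *\<^sub>v (yk - \<rho> \<cdot>\<^sub>v (vsum l (\<lambda>i. A i *\<^sub>v xb i) {1..m-1} + A m *\<^sub>v xk m - b)))
       - (P j *\<^sub>v (xk j - xb j) + (- \<rho>) \<cdot>\<^sub>v (transpose_mat (A j) *\<^sub>v vsum l (\<lambda>i. A i *\<^sub>v (xk i - xb i)) ({1..m-1} - {j})))"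
proof -
  let ?R = "{1..m-1} - {j}"
  let ?yb = "yk - \<rho> \<cdot>\<^sub>v (vsum l (\<lambda>i. A i *\<^sub>v xb i) {1..m-1} + A m *\<^sub>v xk m - b)"
  let ?c = "vsum l (\<lambda>i. A i *\<^sub>v xk i) ({1..m} - {j}) - b - (1 / \<rho>) \<cdot>\<^sub>v yk"
  let ?T = "vsum l (\<lambda>i. A i *\<^sub>v (xk i - xb i)) ?R"
  let ?SkR = "vsum l (\<lambda>i. A i *\<^sub>v xk i) ?R"
  let ?SbR = "vsum l (\<lambda>i. A i *\<^sub>v xb i) ?R"
  have Aj: "A j \<in> carrier_mat l (n j)" using A j by simp
  have Am: "A m \<in> carrier_mat l (n m)" using A m by simp
  have Atj: "transpose_mat (A j) \<in> carrier_mat (n j) l" using Aj by simp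
  have xkj: "xk j \<in> carrier_vec (n j)" and xbj: "xb j \<in> carrier_vec (n j)" using xk xb j by auto
  have xkm: "xk m \<in> carrier_vec (n m)" using xk m by simp
  have Axb: "A j *\<^sub>v xb j \<in> carrier_vec l" using Aj xbj by simp
  have Axm: "A m *\<^sub>v xk m \<in> carrier_vec l" using Am xkm by simp
  have e1: "{1..m} - {j} = insert m ?R" using j m by auto
  have e2: "{1..m-1} = insert j ?R" using j m by auto
  have fR1: "finite ?R" by simp
  have fR2: "m \<notin> ?R"
  proof
    assume "m \<in> ?R" then have "m \<le> m - 1" by simp
    with m show False by arith
  qed
  have fR3: "j \<notin> ?R" by simp
  note fR = fR1 fR2 fR3
  have S1: "vsum l (\<lambda>i. A i *\<^sub>v xk i) ({1..m} - {j}) = A m *\<^sub>v xk m + ?SkR"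
    by (subst e1, rule vsum_insert[OF fR(1,2)])
  have S2: "vsum l (\<lambda>i. A i *\<^sub>v xb i) {1..m-1} = A j *\<^sub>v xb j + ?SbR"
    by (subst e2, rule vsum_insert[OF fR(1,3)])
  have S3: "?T = ?SkR - ?SbR"
  proof -
    have "?T = vsum l (\<lambda>i. A i *\<^sub>v xk i - A i *\<^sub>v xb i) ?R"
    proof (rule vsum_cong)
      fix i assume i: "i \<in> ?R"
      then have Ai: "A i \<in> carrier_mat l (n i)" and "xk i \<in> carrier_vec (n i)" "xb i \<in> carrier_vec (n i)"
        using A xk xb by auto
      then show "A i *\<^sub>v (xk i - xb i) = A i *\<^sub>v xk i - A i *\<^sub>v xb i" by (rule mult_minus_distrib_mat_vec)
    qed
    also have "\<dots> = ?SkR - ?SbR"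
    proof (rule vsum_minus, intro ballI)
      fix i assume "i \<in> ?R"
      then have i1: "1 \<le> i" and i2: "i \<le> m" by auto
      show "A i *\<^sub>v xb i \<in> carrier_vec l" using A[OF i1 i2] xb[OF i1 i2] by (rule mult_mat_vec_carrier)
    qed
    finally show ?thesis .
  qed
  have Lid: "\<rho> \<cdot>\<^sub>v (A j *\<^sub>v xb j + ?c) = \<rho> \<cdot>\<^sub>v ?T - ?yb"
    unfolding S1 S2 S3
    by (rule eq_vecI) (use Axb Axm b yk rh Aj Am in \<open>auto simp: field_simps\<close>)
  have cc: "A j *\<^sub>v xb j + ?c \<in> carrier_vec l" using Axb b yk by simp
  have Tc: "?T \<in> carrier_vec l" by simp
  have ybc: "?yb \<in> carrier_vec l" using yk b Axm by simp
  have "\<rho> \<cdot>\<^sub>v (transpose_mat (A j) *\<^sub>v (A j *\<^sub>v xb j + ?c)) = transpose_mat (A j) *\<^sub>v (\<rho> \<cdot>\<^sub>v (A j *\<^sub>v xb j + ?c))"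
    by (rule mult_mat_vec[OF Atj cc, symmetric])
  also have "\<dots> = transpose_mat (A j) *\<^sub>v (\<rho> \<cdot>\<^sub>v ?T) - transpose_mat (A j) *\<^sub>v ?yb"
    unfolding Lid by (rule mult_minus_distrib_mat_vec[OF Atj]) (use Tc ybc in simp_all)
  also have "transpose_mat (A j) *\<^sub>v (\<rho> \<cdot>\<^sub>v ?T) = \<rho> \<cdot>\<^sub>v (transpose_mat (A j) *\<^sub>v ?T)"
    by (rule mult_mat_vec[OF Atj Tc])
  finally have G1: "\<rho> \<cdot>\<^sub>v (transpose_mat (A j) *\<^sub>v (A j *\<^sub>v xb j + ?c))
     = \<rho> \<cdot>\<^sub>v (transpose_mat (A j) *\<^sub>v ?T) - transpose_mat (A j) *\<^sub>v ?yb" .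
  have G2: "P j *\<^sub>v (xb j - xk j) = P j *\<^sub>v xb j - P j *\<^sub>v xk j" by (rule mult_minus_distrib_mat_vec[OF Pj xbj xkj])
  have G3: "P j *\<^sub>v (xk j - xb j) = P j *\<^sub>v xk j - P j *\<^sub>v xb j" by (rule mult_minus_distrib_mat_vec[OF Pj xkj xbj])
  have c1: "transpose_mat (A j) *\<^sub>v ?T \<in> carrier_vec (n j)" using Atj Tc by simp
  have c2: "transpose_mat (A j) *\<^sub>v ?yb \<in> carrier_vec (n j)" using Atj ybc by simp
  have c3: "P j *\<^sub>v xb j \<in> carrier_vec (n j)" "P j *\<^sub>v xk j \<in> carrier_vec (n j)" using Pj xbj xkj by auto
  show ?thesis unfolding G1 G2 G3
    by (rule eq_vecI) (use c1 c2 c3 Aj Pj in \<open>auto simp: algebra_simps\<close>)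
qed

lemma grad_m:
  fixes A P :: "real mat" and xkm xbm yk b S :: "real vec"
  assumes A: "A \<in> carrier_mat l k" and P: "P \<in> carrier_mat k k"
    and xk: "xkm \<in> carrier_vec k" and xb: "xbm \<in> carrier_vec k"
    and yk: "yk \<in> carrier_vec l" and b: "b \<in> carrier_vec l" and S: "S \<in> carrier_vec l" and rh: "\<rho> \<noteq> 0"
  shows "\<rho> \<cdot>\<^sub>v (transpose_mat A *\<^sub>v (A *\<^sub>v xbm + (\<gamma> \<cdot>\<^sub>v S + (1 - \<gamma>) \<cdot>\<^sub>v (b - A *\<^sub>v xkm) - b - (1 / \<rho>) \<cdot>\<^sub>v yk)))
        + P *\<^sub>v (xbm - xkm)
     = - (transpose_mat A *\<^sub>v (yk - \<rho> \<cdot>\<^sub>v (S + A *\<^sub>v xkm - b)))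
       - ((\<rho> \<cdot>\<^sub>m (transpose_mat A * A) + P) *\<^sub>v (xkm - xbm)
          + (1 - \<gamma>) \<cdot>\<^sub>m transpose_mat A *\<^sub>v (yk - (yk - \<rho> \<cdot>\<^sub>v (S + A *\<^sub>v xkm - b))))"
proof -
  let ?yb = "yk - \<rho> \<cdot>\<^sub>v (S + A *\<^sub>v xkm - b)"
  let ?c = "\<gamma> \<cdot>\<^sub>v S + (1 - \<gamma>) \<cdot>\<^sub>v (b - A *\<^sub>v xkm) - b - (1 / \<rho>) \<cdot>\<^sub>v yk"
  have At: "transpose_mat A \<in> carrier_mat k l" using A by simp
  have AA: "transpose_mat A * A \<in> carrier_mat k k" using A by simp
  have Axb: "A *\<^sub>v xbm \<in> carrier_vec l" and Axk: "A *\<^sub>v xkm \<in> carrier_vec l" using A xb xk by auto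
  have ybc: "?yb \<in> carrier_vec l" using yk S Axk b by simp
  have dyc: "yk - ?yb \<in> carrier_vec l" using yk ybc by simp
  have cc: "A *\<^sub>v xbm + ?c \<in> carrier_vec l" using Axb S b Axk yk by simp
  have Lid: "\<rho> \<cdot>\<^sub>v (A *\<^sub>v xbm + ?c) = ((\<rho> \<cdot>\<^sub>v (A *\<^sub>v xbm) - \<rho> \<cdot>\<^sub>v (A *\<^sub>v xkm)) - ?yb) - (1 - \<gamma>) \<cdot>\<^sub>v (yk - ?yb)"
    by (rule eq_vecI) (use Axb Axk b yk S rh A in \<open>auto simp: field_simps\<close>)
  have U1: "\<rho> \<cdot>\<^sub>v (A *\<^sub>v xbm) \<in> carrier_vec l" "\<rho> \<cdot>\<^sub>v (A *\<^sub>v xkm) \<in> carrier_vec l" using Axb Axk by auto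
  have "\<rho> \<cdot>\<^sub>v (transpose_mat A *\<^sub>v (A *\<^sub>v xbm + ?c)) = transpose_mat A *\<^sub>v (\<rho> \<cdot>\<^sub>v (A *\<^sub>v xbm + ?c))"
    by (rule mult_mat_vec[OF At cc, symmetric])
  also have "\<dots> = transpose_mat A *\<^sub>v (((\<rho> \<cdot>\<^sub>v (A *\<^sub>v xbm) - \<rho> \<cdot>\<^sub>v (A *\<^sub>v xkm)) - ?yb)) - transpose_mat A *\<^sub>v ((1 - \<gamma>) \<cdot>\<^sub>v (yk - ?yb))"
    unfolding Lid by (rule mult_minus_distrib_mat_vec[OF At]) (use U1 ybc dyc in simp_all)
  also have "transpose_mat A *\<^sub>v (((\<rho> \<cdot>\<^sub>v (A *\<^sub>v xbm) - \<rho> \<cdot>\<^sub>v (A *\<^sub>v xkm)) - ?yb))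
      = transpose_mat A *\<^sub>v (\<rho> \<cdot>\<^sub>v (A *\<^sub>v xbm) - \<rho> \<cdot>\<^sub>v (A *\<^sub>v xkm)) - transpose_mat A *\<^sub>v ?yb"
    by (rule mult_minus_distrib_mat_vec[OF At]) (use U1 ybc in simp_all)
  also have "transpose_mat A *\<^sub>v (\<rho> \<cdot>\<^sub>v (A *\<^sub>v xbm) - \<rho> \<cdot>\<^sub>v (A *\<^sub>v xkm))
      = transpose_mat A *\<^sub>v (\<rho> \<cdot>\<^sub>v (A *\<^sub>v xbm)) - transpose_mat A *\<^sub>v (\<rho> \<cdot>\<^sub>v (A *\<^sub>v xkm))"
    by (rule mult_minus_distrib_mat_vec[OF At U1])
  also have "transpose_mat A *\<^sub>v (\<rho> \<cdot>\<^sub>v (A *\<^sub>v xbm)) = \<rho> \<cdot>\<^sub>v (transpose_mat A *\<^sub>v (A *\<^sub>v xbm))"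
    by (rule mult_mat_vec[OF At Axb])
  also have "transpose_mat A *\<^sub>v (\<rho> \<cdot>\<^sub>v (A *\<^sub>v xkm)) = \<rho> \<cdot>\<^sub>v (transpose_mat A *\<^sub>v (A *\<^sub>v xkm))"
    by (rule mult_mat_vec[OF At Axk])
  also have "transpose_mat A *\<^sub>v ((1 - \<gamma>) \<cdot>\<^sub>v (yk - ?yb)) = (1 - \<gamma>) \<cdot>\<^sub>v (transpose_mat A *\<^sub>v (yk - ?yb))"
    by (rule mult_mat_vec[OF At dyc])
  finally have L1: "\<rho> \<cdot>\<^sub>v (transpose_mat A *\<^sub>v (A *\<^sub>v xbm + ?c))
     = ((\<rho> \<cdot>\<^sub>v (transpose_mat A *\<^sub>v (A *\<^sub>v xbm)) - \<rho> \<cdot>\<^sub>v (transpose_mat A *\<^sub>v (A *\<^sub>v xkm)))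
        - transpose_mat A *\<^sub>v ?yb) - (1 - \<gamma>) \<cdot>\<^sub>v (transpose_mat A *\<^sub>v (yk - ?yb))" .
  have L2: "P *\<^sub>v (xbm - xkm) = P *\<^sub>v xbm - P *\<^sub>v xkm" by (rule mult_minus_distrib_mat_vec[OF P xb xk])
  have dx: "xkm - xbm \<in> carrier_vec k" using xk xb by simp
  have rAA: "\<rho> \<cdot>\<^sub>m (transpose_mat A * A) \<in> carrier_mat k k" using AA by simp
  have "(\<rho> \<cdot>\<^sub>m (transpose_mat A * A) + P) *\<^sub>v (xkm - xbm)
      = (\<rho> \<cdot>\<^sub>m (transpose_mat A * A)) *\<^sub>v (xkm - xbm) + P *\<^sub>v (xkm - xbm)"
    by (rule add_mult_distrib_mat_vec[OF rAA P dx])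
  also have "(\<rho> \<cdot>\<^sub>m (transpose_mat A * A)) *\<^sub>v (xkm - xbm) = \<rho> \<cdot>\<^sub>v ((transpose_mat A * A) *\<^sub>v (xkm - xbm))"
    by (rule smult_mat_mult_vec[OF AA dx])
  also have "(transpose_mat A * A) *\<^sub>v (xkm - xbm) = transpose_mat A *\<^sub>v (A *\<^sub>v (xkm - xbm))"
    by (rule assoc_mult_mat_vec[OF At A dx])
  also have "A *\<^sub>v (xkm - xbm) = A *\<^sub>v xkm - A *\<^sub>v xbm" by (rule mult_minus_distrib_mat_vec[OF A xk xb])
  also have "transpose_mat A *\<^sub>v (A *\<^sub>v xkm - A *\<^sub>v xbm) = transpose_mat A *\<^sub>v (A *\<^sub>v xkm) - transpose_mat A *\<^sub>v (A *\<^sub>v xbm)"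
    by (rule mult_minus_distrib_mat_vec[OF At Axk Axb])
  also have "P *\<^sub>v (xkm - xbm) = P *\<^sub>v xkm - P *\<^sub>v xbm" by (rule mult_minus_distrib_mat_vec[OF P xk xb])
  finally have R1: "(\<rho> \<cdot>\<^sub>m (transpose_mat A * A) + P) *\<^sub>v (xkm - xbm)
     = \<rho> \<cdot>\<^sub>v (transpose_mat A *\<^sub>v (A *\<^sub>v xkm) - transpose_mat A *\<^sub>v (A *\<^sub>v xbm)) + (P *\<^sub>v xkm - P *\<^sub>v xbm)" .
  have R2: "(1 - \<gamma>) \<cdot>\<^sub>m transpose_mat A *\<^sub>v (yk - ?yb) = (1 - \<gamma>) \<cdot>\<^sub>v (transpose_mat A *\<^sub>v (yk - ?yb))"
    by (rule smult_mat_mult_vec[OF At dyc])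
  have c1: "transpose_mat A *\<^sub>v (A *\<^sub>v xbm) \<in> carrier_vec k" "transpose_mat A *\<^sub>v (A *\<^sub>v xkm) \<in> carrier_vec k"
    using At Axb Axk by auto
  have c2: "transpose_mat A *\<^sub>v ?yb \<in> carrier_vec k" "transpose_mat A *\<^sub>v (yk - ?yb) \<in> carrier_vec k"
    using At ybc dyc by auto
  have c3: "P *\<^sub>v xbm \<in> carrier_vec k" "P *\<^sub>v xkm \<in> carrier_vec k" using P xb xk by auto
  show ?thesis unfolding L1 L2 R1 R2
    by (rule eq_vecI) (use c1 c2 c3 A P in \<open>auto simp: algebra_simps\<close>)
qed

lemma top_id:
  fixes A :: "real mat" and xkm xbm yk b S :: "real vec"
  assumes A: "A \<in> carrier_mat l k" and xk: "xkm \<in> carrier_vec k" and xb: "xbm \<in> carrier_vec k"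
    and yk: "yk \<in> carrier_vec l" and b: "b \<in> carrier_vec l" and S: "S \<in> carrier_vec l" and rh: "\<rho> \<noteq> 0"
  shows "- A *\<^sub>v (xkm - xbm) + (1 / \<rho>) \<cdot>\<^sub>m 1\<^sub>m l *\<^sub>v (yk - (yk - \<rho> \<cdot>\<^sub>v (S + A *\<^sub>v xkm - b)))
     = (A *\<^sub>v xbm + S) - b"
proof -
  have Axb: "A *\<^sub>v xbm \<in> carrier_vec l" and Axk: "A *\<^sub>v xkm \<in> carrier_vec l" using A xb xk by auto
  have dx: "xkm - xbm \<in> carrier_vec k" using xk xb by simp
  have dy: "yk - (yk - \<rho> \<cdot>\<^sub>v (S + A *\<^sub>v xkm - b)) \<in> carrier_vec l" using yk S Axk b by simp
  have e1: "- A *\<^sub>v (xkm - xbm) = - (A *\<^sub>v xkm - A *\<^sub>v xbm)"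
  proof -
    have "- A *\<^sub>v (xkm - xbm) = - (A *\<^sub>v (xkm - xbm))" by (rule uminus_mult_mat_vec) (use A xb in simp)
    also have "A *\<^sub>v (xkm - xbm) = A *\<^sub>v xkm - A *\<^sub>v xbm" by (rule mult_minus_distrib_mat_vec[OF A xk xb])
    finally show ?thesis .
  qed
  have e2: "(1 / \<rho>) \<cdot>\<^sub>m 1\<^sub>m l *\<^sub>v (yk - (yk - \<rho> \<cdot>\<^sub>v (S + A *\<^sub>v xkm - b)))
      = (1 / \<rho>) \<cdot>\<^sub>v (yk - (yk - \<rho> \<cdot>\<^sub>v (S + A *\<^sub>v xkm - b)))"
    using dy by (subst smult_mat_mult_vec[of "1\<^sub>m l" l l]) auto
  show ?thesis unfolding e1 e2
    by (rule eq_vecI) (use Axb Axk b yk S rh A in \<open>auto simp: field_simps\<close>)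
qed

lemma vsum_smult: assumes "\<forall>i\<in>I. f i \<in> carrier_vec k"
  shows "vsum k (\<lambda>i. c \<cdot>\<^sub>v f i) I = c \<cdot>\<^sub>v vsum k f I"
proof (rule eq_vecI)
  fix r assume "r < dim_vec (c \<cdot>\<^sub>v vsum k f I)"
  then have r: "r < k" by simp
  have "vsum k (\<lambda>i. c \<cdot>\<^sub>v f i) I $ r = (\<Sum>i\<in>I. (c \<cdot>\<^sub>v f i) $ r)" by (rule index_vsum[OF r])
  also have "\<dots> = (\<Sum>i\<in>I. c * f i $ r)"
  proof (rule sum.cong[OF refl])
    fix i assume "i \<in> I" then have "dim_vec (f i) = k" using assms by auto
    then show "(c \<cdot>\<^sub>v f i) $ r = c * f i $ r" using r by simp
  qed
  also have "\<dots> = (c \<cdot>\<^sub>v vsum k f I) $ r" using r by (simp add: index_vsum sum_distrib_left)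
  finally show "vsum k (\<lambda>i. c \<cdot>\<^sub>v f i) I $ r = (c \<cdot>\<^sub>v vsum k f I) $ r" .
qed simp

lemma Qd_low:
  assumes m: "m \<ge> 2" and A: "\<And>i. 1 \<le> i \<Longrightarrow> i \<le> m \<Longrightarrow> A i \<in> carrier_mat l (n i)"
    and P: "\<And>i. 1 \<le> i \<Longrightarrow> i \<le> m \<Longrightarrow> P i \<in> carrier_mat (n i) (n i)"
    and v: "bv (bdim m l n) {1..m+1} v" and j: "1 \<le> j" "j < m"
  shows "bmv (bdim m l n) {1..m+1} (Qblk m l n \<rho> \<gamma> A P) v j
     = P j *\<^sub>v v j + (- \<rho>) \<cdot>\<^sub>v (transpose_mat (A j) *\<^sub>v vsum l (\<lambda>i. A i *\<^sub>v v i) ({1..m-1} - {j}))"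
proof -
  let ?R = "{1..m-1} - {j}"
  let ?Q = "Qblk m l n \<rho> \<gamma> A P"
  have Aj: "A j \<in> carrier_mat l (n j)" using A j by simp
  have Atj: "transpose_mat (A j) \<in> carrier_mat (n j) l" using Aj by simp
  have vi: "v i \<in> carrier_vec (n i)" if "1 \<le> i" "i \<le> m" for i
    using bv_at[OF v, of i] that by (simp add: bdim_low)
  have Avi: "\<forall>i\<in>?R. A i *\<^sub>v v i \<in> carrier_vec l"
  proof
    fix i assume "i \<in> ?R" then have i1: "1 \<le> i" and i2: "i \<le> m" by auto
    show "A i *\<^sub>v v i \<in> carrier_vec l" using A[OF i1 i2] vi[OF i1 i2] by (rule mult_mat_vec_carrier)
  qed
  have fR2: "j \<notin> ?R" by simp
  have e2: "{1..m-1} = insert j ?R" using j m by auto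
  have "bmv (bdim m l n) {1..m+1} ?Q v j = vsum (bdim m l n j) (\<lambda>i. ?Q j i *\<^sub>v v i) {1..m-1}"
    by (rule bmv_sub[OF _ _ _ v]) (use j in \<open>auto simp: Qblk_def\<close>)
  also have "\<dots> = ?Q j j *\<^sub>v v j + vsum (n j) (\<lambda>i. ?Q j i *\<^sub>v v i) ?R"
    using j by (subst e2, subst vsum_insert) (simp_all add: bdim_def)
  also have "vsum (n j) (\<lambda>i. ?Q j i *\<^sub>v v i) ?R = vsum (n j) (\<lambda>i. (- \<rho>) \<cdot>\<^sub>v (transpose_mat (A j) *\<^sub>v (A i *\<^sub>v v i))) ?R"
  proof (rule vsum_cong)
    fix i assume i: "i \<in> ?R"
    then have i1: "1 \<le> i" and i2: "i \<le> m" and ij: "i \<noteq> j" and im: "i < m" by auto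
    have Ai: "A i \<in> carrier_mat l (n i)" using A[OF i1 i2] .
    have AA: "transpose_mat (A j) * A i \<in> carrier_mat (n j) (n i)" using Atj Ai by simp
    have "?Q j i = (- \<rho>) \<cdot>\<^sub>m (transpose_mat (A j) * A i)" using j im ij by (simp add: Qblk_def G1blk_def)
    then have "?Q j i *\<^sub>v v i = (- \<rho>) \<cdot>\<^sub>v ((transpose_mat (A j) * A i) *\<^sub>v v i)"
      using smult_mat_mult_vec[OF AA vi[OF i1 i2]] by simp
    also have "(transpose_mat (A j) * A i) *\<^sub>v v i = transpose_mat (A j) *\<^sub>v (A i *\<^sub>v v i)"
      by (rule assoc_mult_mat_vec[OF Atj Ai vi[OF i1 i2]])
    finally show "?Q j i *\<^sub>v v i = (- \<rho>) \<cdot>\<^sub>v (transpose_mat (A j) *\<^sub>v (A i *\<^sub>v v i))" .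
  qed
  also have "\<dots> = (- \<rho>) \<cdot>\<^sub>v vsum (n j) (\<lambda>i. transpose_mat (A j) *\<^sub>v (A i *\<^sub>v v i)) ?R"
    by (rule vsum_smult) (use Atj Avi in auto)
  also have "vsum (n j) (\<lambda>i. transpose_mat (A j) *\<^sub>v (A i *\<^sub>v v i)) ?R = transpose_mat (A j) *\<^sub>v vsum l (\<lambda>i. A i *\<^sub>v v i) ?R"
    by (rule mat_vsum[OF _ Atj Avi, symmetric]) simp
  also have "?Q j j = P j" using j by (simp add: Qblk_def G1blk_def)
  finally show ?thesis .
qed

lemma dot_lin1: fixes u v a q :: "real vec"
  assumes "u \<in> carrier_vec k" "v \<in> carrier_vec k" "a \<in> carrier_vec k" "q \<in> carrier_vec k"
  shows "(u - v) \<bullet> (- a - q) = (v - u) \<bullet> a + (v - u) \<bullet> q"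
  using assms by (simp add: scalar_prod_expand[of _ k] sum.distrib[symmetric] algebra_simps)

lemma dot_swap: fixes A :: "real mat"
  assumes e: "e \<in> carrier_vec k" and A: "A \<in> carrier_mat l k" and yb: "yb \<in> carrier_vec l" and ys: "ys \<in> carrier_vec l"
  shows "e \<bullet> (transpose_mat A *\<^sub>v yb) + e \<bullet> (- (transpose_mat A *\<^sub>v ys)) = (yb - ys) \<bullet> (A *\<^sub>v e)"
proof -
  have c1: "transpose_mat A *\<^sub>v yb \<in> carrier_vec k" "transpose_mat A *\<^sub>v ys \<in> carrier_vec k" using A yb ys by auto
  have Ae: "A *\<^sub>v e \<in> carrier_vec l" using A e by auto
  have "e \<bullet> (transpose_mat A *\<^sub>v yb) = (transpose_mat A *\<^sub>v yb) \<bullet> e" by (rule comm_scalar_prod[OF e c1(1)])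
  also have "\<dots> = yb \<bullet> (A *\<^sub>v e)" by (rule transpose_vec_mult_scalar[OF A e yb])
  finally have 1: "e \<bullet> (transpose_mat A *\<^sub>v yb) = yb \<bullet> (A *\<^sub>v e)" .
  have "e \<bullet> (- (transpose_mat A *\<^sub>v ys)) = - (e \<bullet> (transpose_mat A *\<^sub>v ys))"
    by (rule scalar_prod_uminus_right) (use e c1 A in simp)
  also have "e \<bullet> (transpose_mat A *\<^sub>v ys) = (transpose_mat A *\<^sub>v ys) \<bullet> e" by (rule comm_scalar_prod[OF e c1(2)])
  also have "\<dots> = ys \<bullet> (A *\<^sub>v e)" by (rule transpose_vec_mult_scalar[OF A e ys])
  finally have 2: "e \<bullet> (- (transpose_mat A *\<^sub>v ys)) = - (ys \<bullet> (A *\<^sub>v e))" .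
  have 3: "(yb - ys) \<bullet> (A *\<^sub>v e) = yb \<bullet> (A *\<^sub>v e) - ys \<bullet> (A *\<^sub>v e)" by (rule minus_scalar_prod_distrib[OF yb ys Ae])
  show ?thesis using 1 2 3 by simp
qed

lemma VI_sum:
  fixes \<theta> :: "nat \<Rightarrow> real vec \<Rightarrow> real" and A P :: "nat \<Rightarrow> real mat" and xk xb xs :: "nat \<Rightarrow> real vec"
  assumes m: "m \<ge> 2"
  and A: "\<And>i. 1 \<le> i \<Longrightarrow> i \<le> m \<Longrightarrow> A i \<in> carrier_mat l (n i)"
  and P: "\<And>i. 1 \<le> i \<Longrightarrow> i \<le> m \<Longrightarrow> P i \<in> carrier_mat (n i) (n i)"
  and xk: "\<And>i. 1 \<le> i \<Longrightarrow> i \<le> m \<Longrightarrow> xk i \<in> carrier_vec (n i)"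
  and xb: "\<And>i. 1 \<le> i \<Longrightarrow> i \<le> m \<Longrightarrow> xb i \<in> carrier_vec (n i)"
  and xs: "\<And>i. 1 \<le> i \<Longrightarrow> i \<le> m \<Longrightarrow> xs i \<in> carrier_vec (n i)"
  and yk: "yk \<in> carrier_vec l" and b: "b \<in> carrier_vec l" and ys: "ys \<in> carrier_vec l" and rh: "\<rho> \<noteq> 0"
  and yb: "yb = yk - \<rho> \<cdot>\<^sub>v (vsum l (\<lambda>i. A i *\<^sub>v xb i) {1..m-1} + A m *\<^sub>v xk m - b)"
  and VIj: "\<And>j. 1 \<le> j \<Longrightarrow> j < m \<Longrightarrow> 0 \<le> \<theta> j (xs j) - \<theta> j (xb j) + (xs j - xb j) \<bullet>
      (\<rho> \<cdot>\<^sub>v (transpose_mat (A j) *\<^sub>v (A j *\<^sub>v xb j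
            + (vsum l (\<lambda>i. A i *\<^sub>v xk i) ({1..m} - {j}) - b - (1 / \<rho>) \<cdot>\<^sub>v yk)))
        + P j *\<^sub>v (xb j - xk j))"
  and VIm: "0 \<le> \<theta> m (xs m) - \<theta> m (xb m) + (xs m - xb m) \<bullet>
      (\<rho> \<cdot>\<^sub>v (transpose_mat (A m) *\<^sub>v (A m *\<^sub>v xb m + (\<gamma> \<cdot>\<^sub>v vsum l (\<lambda>i. A i *\<^sub>v xb i) {1..m-1}
           + (1 - \<gamma>) \<cdot>\<^sub>v (b - A m *\<^sub>v xk m) - b - (1 / \<rho>) \<cdot>\<^sub>v yk)))
        + P m *\<^sub>v (xb m - xk m))"
  and WS: "0 \<le> (\<Sum>i\<in>{1..m}. \<theta> i (xb i)) - (\<Sum>i\<in>{1..m}. \<theta> i (xs i))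
        + (\<Sum>i\<in>{1..m+1}. wdiff (wvec m xb yb) (wvec m xs ys) i \<bullet> Fblk m l A b xs ys i)"
  shows "0 \<le> bbf {1..m+1} (Qblk m l n \<rho> \<gamma> A P) (wdiff (wvec m xb yb) (wvec m xs ys)) (wdiff (wvec m xk yk) (wvec m xb yb))"
proof -
  let ?d = "bdim m l n" and ?I = "{1..m+1}" and ?Q = "Qblk m l n \<rho> \<gamma> A P"
  let ?S = "vsum l (\<lambda>i. A i *\<^sub>v xb i) {1..m-1}"
  define g where "g = wdiff (wvec m xb yb) (wvec m xs ys)"
  define dd where "dd = wdiff (wvec m xk yk) (wvec m xb yb)"
  define Qd where "Qd = bmv ?d ?I ?Q dd"
  define e where "e = (\<lambda>i. xb i - xs i)"
  have Am: "A m \<in> carrier_mat l (n m)" and Pm: "P m \<in> carrier_mat (n m) (n m)" using A P m by auto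
  have gl: "\<And>i. i \<le> m \<Longrightarrow> g i = e i" and gt: "g (m+1) = yb - ys"
    unfolding g_def e_def wdiff_def wvec_def by auto
  have dl: "\<And>i. i \<le> m \<Longrightarrow> dd i = xk i - xb i" and dt: "dd (m+1) = yk - yb"
    unfolding dd_def wdiff_def wvec_def by auto
  have Sc: "?S \<in> carrier_vec l" by simp
  have ybc: "yb \<in> carrier_vec l" unfolding yb using yk b Am xk[of m] m by simp
  have ec: "\<And>i. 1 \<le> i \<Longrightarrow> i \<le> m \<Longrightarrow> e i \<in> carrier_vec (n i)" unfolding e_def using xb xs by auto
  have ddv: "bv ?d ?I dd"
    unfolding bv_def
  proof
    fix i assume i: "i \<in> ?I"
    show "dd i \<in> carrier_vec (?d i)"
    proof (cases "i \<le> m")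
      case True then show ?thesis using dl[OF True] xk[of i] xb[of i] i by (simp add: bdim_low)
    next
      case False then have "i = m + 1" using i by auto
      then show ?thesis using dt yk ybc by (simp add: bdim_def)
    qed
  qed
  have bmQ: "bm ?d ?I ?Q" by (rule bm_Q) (use A P in auto)
  have "bbf ?I ?Q g dd = (\<Sum>i\<in>?I. g i \<bullet> Qd i)" unfolding Qd_def by (rule bbf_bmv[OF _ bmQ ddv]) simp
  also have "\<dots> = (\<Sum>i\<in>{1..m}. g i \<bullet> Qd i) + g (m+1) \<bullet> Qd (m+1)"
  proof -
    have "?I = insert (m+1) {1..m}" by auto
    then show ?thesis by (simp add: add.commute)
  qed
  finally have B0: "bbf ?I ?Q g dd = (\<Sum>i\<in>{1..m}. g i \<bullet> Qd i) + g (m+1) \<bullet> Qd (m+1)" .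
  have low: "g i \<bullet> Qd i \<ge> \<theta> i (xb i) - \<theta> i (xs i) - e i \<bullet> (transpose_mat (A i) *\<^sub>v yb)"
    if i: "i \<in> {1..m}" for i
  proof -
    have i1: "1 \<le> i" and i2: "i \<le> m" using i by auto
    have Ai: "A i \<in> carrier_mat l (n i)" using A i1 i2 .
    have xsi: "xs i \<in> carrier_vec (n i)" and xbi: "xb i \<in> carrier_vec (n i)" and xki: "xk i \<in> carrier_vec (n i)"
      using xs xb xk i1 i2 by auto
    have Aty: "transpose_mat (A i) *\<^sub>v yb \<in> carrier_vec (n i)" using Ai ybc by simp
    have Qdc: "Qd i \<in> carrier_vec (n i)" unfolding Qd_def using bmv_carrier[of ?d ?I ?Q dd i] i2 by (simp add: bdim_low)
    have grad: "\<exists>G. 0 \<le> \<theta> i (xs i) - \<theta> i (xb i) + (xs i - xb i) \<bullet> G \<and>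
                G = - (transpose_mat (A i) *\<^sub>v yb) - Qd i"
    proof (cases "i < m")
      case True
      let ?R = "{1..m-1} - {i}"
      have "Qd i = P i *\<^sub>v dd i + (- \<rho>) \<cdot>\<^sub>v (transpose_mat (A i) *\<^sub>v vsum l (\<lambda>j. A j *\<^sub>v dd j) ?R)"
        unfolding Qd_def by (rule Qd_low[OF m A P ddv i1 True])
      also have "vsum l (\<lambda>j. A j *\<^sub>v dd j) ?R = vsum l (\<lambda>j. A j *\<^sub>v (xk j - xb j)) ?R"
      proof (rule vsum_cong)
        fix j assume "j \<in> ?R" then have "j \<le> m" by auto
        then show "A j *\<^sub>v dd j = A j *\<^sub>v (xk j - xb j)" by (simp add: dl)
      qed
      finally have Qdi: "Qd i = P i *\<^sub>v (xk i - xb i) + (- \<rho>) \<cdot>\<^sub>v (transpose_mat (A i) *\<^sub>v vsum l (\<lambda>j. A j *\<^sub>v (xk j - xb j)) ?R)"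
        using dl[OF i2] by simp
      show ?thesis
        using VIj[OF i1 True] grad_j[where A=A and P=P and xk=xk and xb=xb and n=n, OF m i1 True A P[OF i1 i2] xk xb yk b rh] Qdi
        unfolding yb by auto
    next
      case False
      then have im: "i = m" using i2 by simp
      have "Qd m = ?Q m m *\<^sub>v dd m + ?Q m (m+1) *\<^sub>v dd (m+1)"
        unfolding Qd_def by (rule bmv_two[OF _ _ _ _ _ ddv]) (use m Am Pm in \<open>auto simp: Qblk_def bdim_def\<close>)
      also have "\<dots> = (\<rho> \<cdot>\<^sub>m (transpose_mat (A m) * A m) + P m) *\<^sub>v (xk m - xb m)
          + (1 - \<gamma>) \<cdot>\<^sub>m transpose_mat (A m) *\<^sub>v (yk - yb)"
        using dl[of m] dt by (simp add: Qblk_def)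
      finally have Qdm: "Qd m = (\<rho> \<cdot>\<^sub>m (transpose_mat (A m) * A m) + P m) *\<^sub>v (xk m - xb m)
          + (1 - \<gamma>) \<cdot>\<^sub>m transpose_mat (A m) *\<^sub>v (yk - yb)" .
      show ?thesis unfolding im
        using VIm grad_m[OF Am Pm xk[OF _ order_refl] xb[OF _ order_refl] yk b Sc rh, of \<gamma>] Qdm m
        unfolding yb by auto
    qed
    then obtain G where G1: "0 \<le> \<theta> i (xs i) - \<theta> i (xb i) + (xs i - xb i) \<bullet> G"
      and G2: "G = - (transpose_mat (A i) *\<^sub>v yb) - Qd i" by blast
    have "(xs i - xb i) \<bullet> G = e i \<bullet> (transpose_mat (A i) *\<^sub>v yb) + e i \<bullet> Qd i"
      unfolding G2 e_def by (rule dot_lin1[OF xsi xbi Aty Qdc])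
    then show ?thesis using G1 gl[OF i2] by simp
  qed
  have sum_low: "(\<Sum>i\<in>{1..m}. g i \<bullet> Qd i) \<ge> (\<Sum>i\<in>{1..m}. \<theta> i (xb i)) - (\<Sum>i\<in>{1..m}. \<theta> i (xs i))
       - (\<Sum>i\<in>{1..m}. e i \<bullet> (transpose_mat (A i) *\<^sub>v yb))"
  proof -
    have "(\<Sum>i\<in>{1..m}. g i \<bullet> Qd i) \<ge> (\<Sum>i\<in>{1..m}. \<theta> i (xb i) - \<theta> i (xs i) - e i \<bullet> (transpose_mat (A i) *\<^sub>v yb))"
      by (rule sum_mono) (rule low)
    then show ?thesis by (simp add: sum_subtractf)
  qed
  have e1: "{1..m} = insert m {1..m-1}" using m by auto
  have Vb: "vsum l (\<lambda>i. A i *\<^sub>v xb i) {1..m} = A m *\<^sub>v xb m + ?S"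
    by (subst e1, rule vsum_insert) (use m in auto)
  have "Qd (m+1) = ?Q (m+1) m *\<^sub>v dd m + ?Q (m+1) (m+1) *\<^sub>v dd (m+1)"
    unfolding Qd_def by (rule bmv_two[OF _ _ _ _ _ ddv]) (use m Am Pm in \<open>auto simp: Qblk_def bdim_def\<close>)
  also have "\<dots> = - A m *\<^sub>v (xk m - xb m) + (1 / \<rho>) \<cdot>\<^sub>m 1\<^sub>m l *\<^sub>v (yk - yb)"
    using dl[of m] dt by (simp add: Qblk_def)
  also have "\<dots> = (A m *\<^sub>v xb m + ?S) - b"
    unfolding yb by (rule top_id[OF Am xk[OF _ order_refl] xb[OF _ order_refl] yk b Sc rh]) (use m in auto)
  finally have Qdt: "Qd (m+1) = vsum l (\<lambda>i. A i *\<^sub>v xb i) {1..m} - b" using Vb by simp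
  have "(\<Sum>i\<in>{1..m+1}. wdiff (wvec m xb yb) (wvec m xs ys) i \<bullet> Fblk m l A b xs ys i)
     = (\<Sum>i\<in>{1..m}. e i \<bullet> (- (transpose_mat (A i) *\<^sub>v ys))) + (yb - ys) \<bullet> (vsum l (\<lambda>j. A j *\<^sub>v xs j) {1..m} - b)"
  proof -
    have "{1..m+1} = insert (m+1) {1..m}" by auto
    then have "(\<Sum>i\<in>{1..m+1}. wdiff (wvec m xb yb) (wvec m xs ys) i \<bullet> Fblk m l A b xs ys i)
       = wdiff (wvec m xb yb) (wvec m xs ys) (m+1) \<bullet> Fblk m l A b xs ys (m+1)
         + (\<Sum>i\<in>{1..m}. wdiff (wvec m xb yb) (wvec m xs ys) i \<bullet> Fblk m l A b xs ys i)" by simp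
    also have "(\<Sum>i\<in>{1..m}. wdiff (wvec m xb yb) (wvec m xs ys) i \<bullet> Fblk m l A b xs ys i)
       = (\<Sum>i\<in>{1..m}. e i \<bullet> (- (transpose_mat (A i) *\<^sub>v ys)))"
      by (rule sum.cong) (auto simp: wdiff_def wvec_def Fblk_def e_def)
    also have "wdiff (wvec m xb yb) (wvec m xs ys) (m+1) \<bullet> Fblk m l A b xs ys (m+1)
       = (yb - ys) \<bullet> (vsum l (\<lambda>j. A j *\<^sub>v xs j) {1..m} - b)"
      by (simp add: wdiff_def wvec_def Fblk_def)
    finally show ?thesis by simp
  qed
  note WS' = WS[unfolded this]
  define W where "W = vsum l (\<lambda>i. A i *\<^sub>v e i) {1..m}"
  have AEc: "\<forall>i\<in>{1..m}. A i *\<^sub>v e i \<in> carrier_vec l"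
  proof
    fix i assume "i \<in> {1..m}" then have i1: "1 \<le> i" and i2: "i \<le> m" by auto
    show "A i *\<^sub>v e i \<in> carrier_vec l" using A[OF i1 i2] ec[OF i1 i2] by (rule mult_mat_vec_carrier)
  qed
  have T1: "(\<Sum>i\<in>{1..m}. e i \<bullet> (transpose_mat (A i) *\<^sub>v yb)) + (\<Sum>i\<in>{1..m}. e i \<bullet> (- (transpose_mat (A i) *\<^sub>v ys)))
      = (yb - ys) \<bullet> W"
  proof -
    have "(\<Sum>i\<in>{1..m}. e i \<bullet> (transpose_mat (A i) *\<^sub>v yb)) + (\<Sum>i\<in>{1..m}. e i \<bullet> (- (transpose_mat (A i) *\<^sub>v ys)))
        = (\<Sum>i\<in>{1..m}. (yb - ys) \<bullet> (A i *\<^sub>v e i))"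
      unfolding sum.distrib[symmetric]
      by (rule sum.cong[OF refl], rule dot_swap) (use ec A ybc ys in auto)
    also have "\<dots> = (yb - ys) \<bullet> W" unfolding W_def by (rule vsum_dot[symmetric]) (use AEc in auto)
    finally show ?thesis .
  qed
  have T2: "(yb - ys) \<bullet> (vsum l (\<lambda>i. A i *\<^sub>v xb i) {1..m} - b) - (yb - ys) \<bullet> (vsum l (\<lambda>j. A j *\<^sub>v xs j) {1..m} - b)
      = (yb - ys) \<bullet> W"
  proof -
    have W': "W = vsum l (\<lambda>i. A i *\<^sub>v xb i) {1..m} - vsum l (\<lambda>j. A j *\<^sub>v xs j) {1..m}"
    proof -
      have "W = vsum l (\<lambda>i. A i *\<^sub>v xb i - A i *\<^sub>v xs i) {1..m}"
        unfolding W_def e_def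
      proof (rule vsum_cong)
        fix i assume "i \<in> {1..m}" then have i1: "1 \<le> i" and i2: "i \<le> m" by auto
        show "A i *\<^sub>v (xb i - xs i) = A i *\<^sub>v xb i - A i *\<^sub>v xs i"
          by (rule mult_minus_distrib_mat_vec[OF A[OF i1 i2] xb[OF i1 i2] xs[OF i1 i2]])
      qed
      also have "\<dots> = vsum l (\<lambda>i. A i *\<^sub>v xb i) {1..m} - vsum l (\<lambda>j. A j *\<^sub>v xs j) {1..m}"
      proof (rule vsum_minus, intro ballI)
        fix i assume "i \<in> {1..m}" then have i1: "1 \<le> i" and i2: "i \<le> m" by auto
        show "A i *\<^sub>v xs i \<in> carrier_vec l" using A[OF i1 i2] xs[OF i1 i2] by (rule mult_mat_vec_carrier)
      qed
      finally show ?thesis .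
    qed
    have "(yb - ys) \<bullet> (vsum l (\<lambda>i. A i *\<^sub>v xb i) {1..m} - b) - (yb - ys) \<bullet> (vsum l (\<lambda>j. A j *\<^sub>v xs j) {1..m} - b)
       = (yb - ys) \<bullet> ((vsum l (\<lambda>i. A i *\<^sub>v xb i) {1..m} - b) - (vsum l (\<lambda>j. A j *\<^sub>v xs j) {1..m} - b))"
      by (rule scalar_prod_minus_distrib[of _ l, symmetric]) (use ybc ys b in simp_all)
    also have "(vsum l (\<lambda>i. A i *\<^sub>v xb i) {1..m} - b) - (vsum l (\<lambda>j. A j *\<^sub>v xs j) {1..m} - b) = W"
      unfolding W' by (rule eq_vecI) (use b in auto)
    finally show ?thesis .
  qed
  have top: "g (m+1) \<bullet> Qd (m+1) = (yb - ys) \<bullet> (vsum l (\<lambda>i. A i *\<^sub>v xb i) {1..m} - b)"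
    using gt Qdt by simp
  have "0 \<le> bbf ?I ?Q g dd"
    using B0 sum_low top WS' T1 T2 by linarith
  then show ?thesis unfolding g_def dd_def .
qed

theorem lemma3p3:
  fixes m l :: nat and n :: "nat \<Rightarrow> nat"
    and \<theta> :: "nat \<Rightarrow> real vec \<Rightarrow> real" and X :: "nat \<Rightarrow> real vec set"
    and A P :: "nat \<Rightarrow> real mat" and b :: "real vec"
    and \<rho> \<gamma> :: real
    and x :: "nat \<Rightarrow> nat \<Rightarrow> real vec" and y :: "nat \<Rightarrow> real vec"
  assumes m2: "m \<ge> 2" and lpos: "l > 0" and npos: "\<forall>i\<in>{1..m}. n i > 0"
    and theta_convex: "\<forall>i\<in>{1..m}. convex_vfun (n i) (\<theta> i)"
    and X_nonempty: "\<forall>i\<in>{1..m}. X i \<noteq> {}"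
    and X_convex: "\<forall>i\<in>{1..m}. convex_vset (n i) (X i)"
    and X_closed: "\<forall>i\<in>{1..m}. closed_vset (n i) (X i)"
    and A_dim: "\<forall>i\<in>{1..m}. A i \<in> carrier_mat l (n i)"
    and A_rank: "\<forall>i\<in>{1..m}. full_col_rank (A i)"
    and b_dim: "b \<in> carrier_vec l"
    and P_solvable: "\<exists>xs. (\<forall>i\<in>{1..m}. xs i \<in> X i) \<and> vsum l (\<lambda>i. A i *\<^sub>v xs i) {1..m} = b \<and>
        (\<forall>x'. (\<forall>i\<in>{1..m}. x' i \<in> X i) \<and> vsum l (\<lambda>i. A i *\<^sub>v x' i) {1..m} = b \<longrightarrow>
           (\<Sum>i\<in>{1..m}. \<theta> i (xs i)) \<le> (\<Sum>i\<in>{1..m}. \<theta> i (x' i)))"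
    and Wstar_nonempty: "Wstar m l n \<theta> X A b \<noteq> {}"
    and rho_pos: "\<rho> > 0" and gamma: "0 < \<gamma>" "\<gamma> < 2"
    and P_pd: "\<forall>i\<in>{1..m}. sym_posdef (n i) (P i)"
    and G1_pd: "\<forall>R. (\<forall>i\<in>{1..m-1}. R i \<in> carrier_vec (n i)) \<and> (\<exists>i\<in>{1..m-1}. R i \<noteq> 0\<^sub>v (n i))
        \<longrightarrow> bqf {1..m-1} (G1blk m \<rho> A P) R > 0"
    and init: "\<forall>i\<in>{1..m}. x 0 i \<in> X i" "y 0 \<in> carrier_vec l"
    and step_j: "\<forall>k. \<forall>j\<in>{1..m-1}. is_arg_min
        (\<lambda>z. \<theta> j z + \<rho> / 2 * sqn (A j *\<^sub>v z + vsum l (\<lambda>i. A i *\<^sub>v x k i) ({1..m} - {j}) - b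
                 - (1 / \<rho>) \<cdot>\<^sub>v y k) + 1 / 2 * gnorm2 (P j) (z - x k j))
        (\<lambda>z. z \<in> X j) (x (Suc k) j)"
    and step_m: "\<forall>k. is_arg_min
        (\<lambda>z. \<theta> m z + \<rho> / 2 * sqn (\<gamma> \<cdot>\<^sub>v vsum l (\<lambda>i. A i *\<^sub>v x (Suc k) i) {1..m-1}
                 + (1 - \<gamma>) \<cdot>\<^sub>v (b - A m *\<^sub>v x k m) + A m *\<^sub>v z - b - (1 / \<rho>) \<cdot>\<^sub>v y k)
             + 1 / 2 * gnorm2 (P m) (z - x k m))
        (\<lambda>z. z \<in> X m) (x (Suc k) m)"
    and step_y: "\<forall>k. y (Suc k) = y k - \<rho> \<cdot>\<^sub>v (\<gamma> \<cdot>\<^sub>v vsum l (\<lambda>i. A i *\<^sub>v x (Suc k) i) {1..m-1}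
                 + (1 - \<gamma>) \<cdot>\<^sub>v (b - A m *\<^sub>v x k m) + A m *\<^sub>v x (Suc k) m - b)"
  shows "\<forall>k. \<forall>(xs, ys)\<in>Wstar m l n \<theta> X A b.
    (let H = Hblk m l n \<rho> \<gamma> A P; N = Nblk m l n \<rho> \<gamma> A P; I = {1..m+1};
         wk = wvec m (x k) (y k); wk1 = wvec m (x (Suc k)) (y (Suc k)); ws = wvec m xs ys;
         wbar = wvec m (x (Suc k))
                  (y k - \<rho> \<cdot>\<^sub>v (vsum l (\<lambda>i. A i *\<^sub>v x (Suc k) i) {1..m-1} + A m *\<^sub>v x k m - b))
     in bqf I H (wdiff wk1 ws) \<le> bqf I H (wdiff wk ws) - bqf I N (wdiff wk wbar))"
proof (intro allI ballI, clarify)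
  fix k xs ys
  assume wsm: "(xs, ys) \<in> Wstar m l n \<theta> X A b"
  let ?d = "bdim m l n" and ?I = "{1..m+1}"
  let ?H = "Hblk m l n \<rho> \<gamma> A P" and ?Q = "Qblk m l n \<rho> \<gamma> A P" and ?M = "Mblk m l n \<rho> \<gamma> A"
  have rh: "\<rho> \<noteq> 0" using rho_pos by simp
  have g0: "\<gamma> \<noteq> 0" using gamma by simp
  have m1: "m \<ge> 1" using m2 by simp
  have Ac: "\<And>i. 1 \<le> i \<Longrightarrow> i \<le> m \<Longrightarrow> A i \<in> carrier_mat l (n i)" using A_dim by auto
  have Pc: "\<And>i. 1 \<le> i \<Longrightarrow> i \<le> m \<Longrightarrow> P i \<in> carrier_mat (n i) (n i)"
    using P_pd unfolding sym_posdef_def by auto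
  have Ps: "\<And>i. 1 \<le> i \<Longrightarrow> i \<le> m \<Longrightarrow> transpose_mat (P i) = P i"
    using P_pd unfolding sym_posdef_def by auto
  have Xc: "\<And>i. 1 \<le> i \<Longrightarrow> i \<le> m \<Longrightarrow> X i \<subseteq> carrier_vec (n i)"
    using X_convex unfolding convex_vset_def by auto
  have xX: "x k' i \<in> X i" if "1 \<le> i" "i \<le> m" for k' i
  proof (cases k')
    case 0 then show ?thesis using init(1) that by auto
  next
    case (Suc k'')
    show ?thesis
    proof (cases "i < m")
      case True
      have "i \<in> {1..m-1}" using True that by auto
      then show ?thesis using step_j unfolding Suc is_arg_min_def by blast
    next
      case False
      then have "i = m" using that by simp
      then show ?thesis using step_m unfolding Suc is_arg_min_def by blast
    qed
  qed
  have xc: "x k' i \<in> carrier_vec (n i)" if "1 \<le> i" "i \<le> m" for k' i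
    using xX[OF that] Xc[OF that] by auto
  have yc: "y k' \<in> carrier_vec l" for k'
  proof (induction k')
    case 0 then show ?case using init(2) .
  next
    case (Suc k') then show ?case using step_y b_dim Ac[of m] m1 xc[where k'=k' and i=m] xc[where k'="Suc k'" and i=m] by simp
  qed
  have xsX: "\<And>i. 1 \<le> i \<Longrightarrow> i \<le> m \<Longrightarrow> xs i \<in> X i" and ysc: "ys \<in> carrier_vec l"
    and WSall: "\<forall>x y. (\<forall>i\<in>{1..m}. x i \<in> X i) \<and> y \<in> carrier_vec l \<longrightarrow>
        (\<Sum>i\<in>{1..m}. \<theta> i (x i)) - (\<Sum>i\<in>{1..m}. \<theta> i (xs i))
        + (\<Sum>i\<in>{1..m+1}. wdiff (wvec m x y) (wvec m xs ys) i \<bullet> Fblk m l A b xs ys i) \<ge> 0"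
    using wsm unfolding Wstar_def by auto
  have xsc: "\<And>i. 1 \<le> i \<Longrightarrow> i \<le> m \<Longrightarrow> xs i \<in> carrier_vec (n i)" using xsX Xc by blast
  define xk where "xk = x k"
  define xb where "xb = x (Suc k)"
  define yk where "yk = y k"
  define S where "S = vsum l (\<lambda>i. A i *\<^sub>v xb i) {1..m-1}"
  define yb where "yb = yk - \<rho> \<cdot>\<^sub>v (S + A m *\<^sub>v xk m - b)"
  have xkc: "\<And>i. 1 \<le> i \<Longrightarrow> i \<le> m \<Longrightarrow> xk i \<in> carrier_vec (n i)" unfolding xk_def by (rule xc)
  have xbc: "\<And>i. 1 \<le> i \<Longrightarrow> i \<le> m \<Longrightarrow> xb i \<in> carrier_vec (n i)" unfolding xb_def by (rule xc)
  have ykc: "yk \<in> carrier_vec l" unfolding yk_def by (rule yc)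
  have Am: "A m \<in> carrier_mat l (n m)" using Ac m1 by simp
  have Pm: "P m \<in> carrier_mat (n m) (n m)" using Pc m1 by simp
  have Sc: "S \<in> carrier_vec l" unfolding S_def by simp
  have ybc: "yb \<in> carrier_vec l" unfolding yb_def using ykc Sc Am xkc[of m] m1 b_dim by simp
  have VIj: "0 \<le> \<theta> j (xs j) - \<theta> j (xb j) + (xs j - xb j) \<bullet>
      (\<rho> \<cdot>\<^sub>v (transpose_mat (A j) *\<^sub>v (A j *\<^sub>v xb j
            + (vsum l (\<lambda>i. A i *\<^sub>v xk i) ({1..m} - {j}) - b - (1 / \<rho>) \<cdot>\<^sub>v yk)))
        + P j *\<^sub>v (xb j - xk j))" if j1: "1 \<le> j" and j2: "j < m" for j
  proof -
    have jm: "j \<le> m" using j2 by simp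
    have jI: "j \<in> {1..m-1}" using j1 j2 by auto
    let ?c = "vsum l (\<lambda>i. A i *\<^sub>v xk i) ({1..m} - {j}) - b - (1 / \<rho>) \<cdot>\<^sub>v yk"
    have cc: "?c \<in> carrier_vec l" using b_dim ykc by simp
    have Aj: "A j \<in> carrier_mat l (n j)" using Ac j1 jm .
    have am: "is_arg_min (\<lambda>z. \<theta> j z + \<rho> / 2 * sqn (A j *\<^sub>v z + vsum l (\<lambda>i. A i *\<^sub>v xk i) ({1..m} - {j}) - b
                 - (1 / \<rho>) \<cdot>\<^sub>v yk) + 1 / 2 * gnorm2 (P j) (z - xk j))
        (\<lambda>z. z \<in> X j) (xb j)"
      using step_j jI unfolding xk_def xb_def yk_def by blast
    have "\<theta> j (xs j) - \<theta> j (xb j) + (xs j - xb j) \<bullet> (\<rho> \<cdot>\<^sub>v (transpose_mat (A j) *\<^sub>v (A j *\<^sub>v xb j + ?c))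
          + P j *\<^sub>v (xb j - xk j)) \<ge> 0"
    proof (rule argmin_VI[where F = "\<lambda>z. A j *\<^sub>v z + vsum l (\<lambda>i. A i *\<^sub>v xk i) ({1..m} - {j}) - b - (1 / \<rho>) \<cdot>\<^sub>v yk"])
      show "convex_vfun (n j) (\<theta> j)" using theta_convex j1 jm by auto
      show "convex_vset (n j) (X j)" using X_convex j1 jm by auto
      show "A j \<in> carrier_mat l (n j)" by (rule Aj)
      show "?c \<in> carrier_vec l" by (rule cc)
      show "A j *\<^sub>v z + vsum l (\<lambda>i. A i *\<^sub>v xk i) ({1..m} - {j}) - b - (1 / \<rho>) \<cdot>\<^sub>v yk = A j *\<^sub>v z + ?c"
        if "z \<in> carrier_vec (n j)" for z
        by (rule eq_vecI) (use that Aj b_dim ykc in auto)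
      show "P j \<in> carrier_mat (n j) (n j)" using Pc j1 jm .
      show "transpose_mat (P j) = P j" using Ps j1 jm .
      show "xk j \<in> carrier_vec (n j)" using xkc j1 jm .
      show "0 \<le> \<rho>" using rho_pos by simp
      show "is_arg_min (\<lambda>z. \<theta> j z + \<rho> / 2 * sqn (A j *\<^sub>v z + vsum l (\<lambda>i. A i *\<^sub>v xk i) ({1..m} - {j}) - b
                 - (1 / \<rho>) \<cdot>\<^sub>v yk) + 1 / 2 * gnorm2 (P j) (z - xk j)) (\<lambda>z. z \<in> X j) (xb j)" by (rule am)
      show "xs j \<in> X j" using xsX j1 jm .
    qed
    then show ?thesis by simp
  qed
  have VIm: "0 \<le> \<theta> m (xs m) - \<theta> m (xb m) + (xs m - xb m) \<bullet>
      (\<rho> \<cdot>\<^sub>v (transpose_mat (A m) *\<^sub>v (A m *\<^sub>v xb m + (\<gamma> \<cdot>\<^sub>v vsum l (\<lambda>i. A i *\<^sub>v xb i) {1..m-1}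
           + (1 - \<gamma>) \<cdot>\<^sub>v (b - A m *\<^sub>v xk m) - b - (1 / \<rho>) \<cdot>\<^sub>v yk)))
        + P m *\<^sub>v (xb m - xk m))"
  proof -
    let ?c = "\<gamma> \<cdot>\<^sub>v vsum l (\<lambda>i. A i *\<^sub>v xb i) {1..m-1} + (1 - \<gamma>) \<cdot>\<^sub>v (b - A m *\<^sub>v xk m) - b - (1 / \<rho>) \<cdot>\<^sub>v yk"
    have Axk: "A m *\<^sub>v xk m \<in> carrier_vec l" using Am xkc[of m] m1 by simp
    have cc: "?c \<in> carrier_vec l" using b_dim ykc Axk by simp
    have am: "is_arg_min (\<lambda>z. \<theta> m z + \<rho> / 2 * sqn (\<gamma> \<cdot>\<^sub>v vsum l (\<lambda>i. A i *\<^sub>v xb i) {1..m-1}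
                 + (1 - \<gamma>) \<cdot>\<^sub>v (b - A m *\<^sub>v xk m) + A m *\<^sub>v z - b - (1 / \<rho>) \<cdot>\<^sub>v yk)
             + 1 / 2 * gnorm2 (P m) (z - xk m))
        (\<lambda>z. z \<in> X m) (xb m)"
      using step_m unfolding xk_def xb_def yk_def by blast
    have "\<theta> m (xs m) - \<theta> m (xb m) + (xs m - xb m) \<bullet> (\<rho> \<cdot>\<^sub>v (transpose_mat (A m) *\<^sub>v (A m *\<^sub>v xb m + ?c))
          + P m *\<^sub>v (xb m - xk m)) \<ge> 0"
    proof (rule argmin_VI[where F = "\<lambda>z. \<gamma> \<cdot>\<^sub>v vsum l (\<lambda>i. A i *\<^sub>v xb i) {1..m-1}
                 + (1 - \<gamma>) \<cdot>\<^sub>v (b - A m *\<^sub>v xk m) + A m *\<^sub>v z - b - (1 / \<rho>) \<cdot>\<^sub>v yk"])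
      show "convex_vfun (n m) (\<theta> m)" using theta_convex m1 by auto
      show "convex_vset (n m) (X m)" using X_convex m1 by auto
      show "A m \<in> carrier_mat l (n m)" by (rule Am)
      show "?c \<in> carrier_vec l" by (rule cc)
      show "\<gamma> \<cdot>\<^sub>v vsum l (\<lambda>i. A i *\<^sub>v xb i) {1..m-1}
                 + (1 - \<gamma>) \<cdot>\<^sub>v (b - A m *\<^sub>v xk m) + A m *\<^sub>v z - b - (1 / \<rho>) \<cdot>\<^sub>v yk = A m *\<^sub>v z + ?c"
        if "z \<in> carrier_vec (n m)" for z
        by (rule eq_vecI) (use that Am b_dim ykc Axk in auto)
      show "P m \<in> carrier_mat (n m) (n m)" by (rule Pm)
      show "transpose_mat (P m) = P m" using Ps m1 by simp
      show "xk m \<in> carrier_vec (n m)" using xkc m1 by simp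
      show "0 \<le> \<rho>" using rho_pos by simp
      show "is_arg_min (\<lambda>z. \<theta> m z + \<rho> / 2 * sqn (\<gamma> \<cdot>\<^sub>v vsum l (\<lambda>i. A i *\<^sub>v xb i) {1..m-1}
                 + (1 - \<gamma>) \<cdot>\<^sub>v (b - A m *\<^sub>v xk m) + A m *\<^sub>v z - b - (1 / \<rho>) \<cdot>\<^sub>v yk)
             + 1 / 2 * gnorm2 (P m) (z - xk m)) (\<lambda>z. z \<in> X m) (xb m)" by (rule am)
      show "xs m \<in> X m" using xsX m1 by simp
    qed
    then show ?thesis by simp
  qed
  have WS: "0 \<le> (\<Sum>i\<in>{1..m}. \<theta> i (xb i)) - (\<Sum>i\<in>{1..m}. \<theta> i (xs i))
        + (\<Sum>i\<in>{1..m+1}. wdiff (wvec m xb yb) (wvec m xs ys) i \<bullet> Fblk m l A b xs ys i)"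
    using WSall[rule_format, of xb yb] xX ybc unfolding xb_def by auto
  have VI: "0 \<le> bbf ?I ?Q (wdiff (wvec m xb yb) (wvec m xs ys)) (wdiff (wvec m xk yk) (wvec m xb yb))"
    by (rule VI_sum[OF m2 Ac Pc xkc xbc xsc ykc b_dim ysc rh yb_def[unfolded S_def] VIj VIm WS])
  define wk where "wk = wvec m xk yk"
  define wk1 where "wk1 = wvec m xb (y (Suc k))"
  define ws where "ws = wvec m xs ys"
  define wbar where "wbar = wvec m xb yb"
  have bvw: "bv ?d ?I (wdiff (wvec m u yu) (wvec m v yv))"
    if "\<And>i. 1 \<le> i \<Longrightarrow> i \<le> m \<Longrightarrow> u i \<in> carrier_vec (n i)" "\<And>i. 1 \<le> i \<Longrightarrow> i \<le> m \<Longrightarrow> v i \<in> carrier_vec (n i)"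
       "yu \<in> carrier_vec l" "yv \<in> carrier_vec l" for u v yu yv
    unfolding bv_def
  proof
    fix i assume i: "i \<in> ?I"
    show "wdiff (wvec m u yu) (wvec m v yv) i \<in> carrier_vec (?d i)"
    proof (cases "i \<le> m")
      case True then show ?thesis using that(1,2)[of i] i by (simp add: wdiff_def wvec_def bdim_def)
    next
      case False then show ?thesis using that(3,4) by (simp add: wdiff_def wvec_def bdim_def)
    qed
  qed
  have ddv: "bv ?d ?I (wdiff wk wbar)" unfolding wk_def wbar_def by (rule bvw[OF xkc xbc ykc ybc])
  have av: "bv ?d ?I (wdiff wk ws)" unfolding wk_def ws_def by (rule bvw[OF xkc xsc ykc ysc])
  have gv: "bv ?d ?I (wdiff wbar ws)" unfolding wbar_def ws_def by (rule bvw[OF xbc xsc ybc ysc])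
  have bmH: "bm ?d ?I ?H" by (rule bm_H[OF Ac Pc])
  have bmQ: "bm ?d ?I ?Q" by (rule bm_Q[OF Ac Pc])
  have bmM: "bm ?d ?I ?M" by (rule bm_M[OF Ac m1])
  have gdef: "wdiff wbar ws i = wdiff wk ws i - wdiff wk wbar i" if i: "i \<in> ?I" for i
  proof (cases "i \<le> m")
    case True
    have c: "xk i \<in> carrier_vec (n i)" "xb i \<in> carrier_vec (n i)" "xs i \<in> carrier_vec (n i)"
      using xkc xbc xsc True i by auto
    show ?thesis using True c unfolding wdiff_def wvec_def wk_def ws_def wbar_def
      by (intro eq_vecI) auto
  next
    case False
    show ?thesis using False ykc ybc ysc unfolding wdiff_def wvec_def wk_def ws_def wbar_def
      by (intro eq_vecI) auto
  qed
  have edef: "wdiff wk1 ws i = wdiff wk ws i - bmv ?d ?I ?M (wdiff wk wbar) i" if i: "i \<in> ?I" for i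
  proof (cases "i \<le> m")
    case True
    have iI: "i \<in> {1..m}" using True i by auto
    have c: "xk i \<in> carrier_vec (n i)" "xb i \<in> carrier_vec (n i)" "xs i \<in> carrier_vec (n i)"
      using xkc xbc xsc True i by auto
    have "bmv ?d ?I ?M (wdiff wk wbar) i = wdiff wk wbar i" by (rule Mv_low[OF m2 ddv iI])
    then show ?thesis using True c unfolding wdiff_def wvec_def wk_def ws_def wbar_def wk1_def
      by (intro eq_vecI) auto
  next
    case False
    then have im: "i = m + 1" using i by auto
    have "bmv ?d ?I ?M (wdiff wk wbar) (m+1) = (- \<rho>) \<cdot>\<^sub>v (A m *\<^sub>v wdiff wk wbar m) + \<gamma> \<cdot>\<^sub>v wdiff wk wbar (m+1)"
      by (rule Mv_top[where A=A, OF m2 ddv Am])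
    also have "\<dots> = (- \<rho>) \<cdot>\<^sub>v (A m *\<^sub>v xk m - A m *\<^sub>v xb m) + \<gamma> \<cdot>\<^sub>v (yk - yb)"
      unfolding wdiff_def wvec_def wk_def wbar_def
      using mult_minus_distrib_mat_vec[OF Am xkc[of m] xbc[of m]] m1 by simp
    finally have Mt: "bmv ?d ?I ?M (wdiff wk wbar) (m+1) = (- \<rho>) \<cdot>\<^sub>v (A m *\<^sub>v xk m - A m *\<^sub>v xb m) + \<gamma> \<cdot>\<^sub>v (yk - yb)" .
    have Axk: "A m *\<^sub>v xk m \<in> carrier_vec l" and Axb: "A m *\<^sub>v xb m \<in> carrier_vec l"
      using Am xkc[of m] xbc[of m] m1 by auto
    have yS: "y (Suc k) = yk - \<rho> \<cdot>\<^sub>v (\<gamma> \<cdot>\<^sub>v S + (1 - \<gamma>) \<cdot>\<^sub>v (b - A m *\<^sub>v xk m) + A m *\<^sub>v xb m - b)"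
      using step_y unfolding yk_def S_def xb_def xk_def by blast
    show ?thesis unfolding im Mt
      unfolding wdiff_def wvec_def wk_def ws_def wk1_def yS yb_def
      by (intro eq_vecI) (use Axk Axb Sc ykc ysc b_dim Am in \<open>auto simp: algebra_simps\<close>)
  qed
  have main: "bbf ?I ?H (wdiff wk1 ws) (wdiff wk1 ws) \<le> bbf ?I ?H (wdiff wk ws) (wdiff wk ws)
     - bbf ?I (bsub (badd (btrans ?Q) ?Q) (bmul ?d ?I (btrans ?M) (bmul ?d ?I ?H ?M))) (wdiff wk wbar) (wdiff wk wbar)"
  proof (rule abstract_main[OF _ bmH bmQ bmM])
    show "finite ?I" by simp
    show "\<forall>i\<in>?I. \<forall>j\<in>?I. ?H i j = transpose_mat (?H j i)" by (rule Hsym[OF m2 Ac Ps Pc])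
    show "\<And>v i. bv ?d ?I v \<Longrightarrow> i \<in> ?I \<Longrightarrow> bmv ?d ?I ?H (bmv ?d ?I ?M v) i = bmv ?d ?I ?Q v i"
      by (rule HMQ[OF m2 Ac Pc g0 rh])
    show "bv ?d ?I (wdiff wk ws)" by (rule av)
    show "bv ?d ?I (wdiff wk wbar)" by (rule ddv)
    show "bv ?d ?I (wdiff wbar ws)" by (rule gv)
    show "\<And>i. i \<in> ?I \<Longrightarrow> wdiff wbar ws i = wdiff wk ws i - wdiff wk wbar i" by (rule gdef)
    show "\<And>i. i \<in> ?I \<Longrightarrow> wdiff wk1 ws i = wdiff wk ws i - bmv ?d ?I ?M (wdiff wk wbar) i" by (rule edef)
    show "0 \<le> bbf ?I ?Q (wdiff wbar ws) (wdiff wk wbar)" using VI unfolding wbar_def ws_def wk_def .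
  qed
  show "let H = Hblk m l n \<rho> \<gamma> A P; N = Nblk m l n \<rho> \<gamma> A P; I = {1..m+1};
         wk = wvec m (x k) (y k); wk1 = wvec m (x (Suc k)) (y (Suc k)); ws = wvec m xs ys;
         wbar = wvec m (x (Suc k))
                  (y k - \<rho> \<cdot>\<^sub>v (vsum l (\<lambda>i. A i *\<^sub>v x (Suc k) i) {1..m-1} + A m *\<^sub>v x k m - b))
     in bqf I H (wdiff wk1 ws) \<le> bqf I H (wdiff wk ws) - bqf I N (wdiff wk wbar)"
    using main unfolding Let_def Nblk_def bqf_bbf wk_def wk1_def ws_def wbar_def yb_def S_def xk_def xb_def yk_def .
qed

end
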